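(* Let $m,\mathfrak{m}\in\mathbb{N}$, let $f\in L^2([0,1];\mathbb{C}^m)$ be $\mathfrak{m}$-Fourier bandlimited, let $0<\alpha<\beta<1$, let $N>\mathfrak{m}$ be an integer, and set $$\sigma=\frac{(N-\mathfrak{m})^{\beta}}{\sqrt{6}\,\pi},\qquad r=\frac{3\pi}{(N-\mathfrak{m})^{\alpha}}.$$ Define $$\mathcal{R}_{r,\sigma}f(x)=\sum_{j=0}^{2N-1} f(j/2N)\,s_N(x-j/2N)\,\mathcal{G}_{r,\sigma}(x-j/2N),\qquad x\in[0,1].$$ Then there exists $C>0$ such that, for all sufficiently large $N$, $$\|f-\mathcal{R}_{r,\sigma}f\|_{L^2([0,1];\mathbb{C}^m)}\le C\,\widetilde{\mathcal{E}}(N,\mathfrak{m},\alpha,\beta)\,\|f\|_{L^2([0,1];\mathbb{C}^m)},$$ where $$\widetilde{\mathcal{E}}(N,\mathfrak{m},\alpha,\beta)=e^{-3\pi^2(N-\mathfrak{m})^{2(1-\beta)}}\max\{1,(N-\mathfrak{m})^{2\beta-1}\}+(N-\mathfrak{m})^{\alpha+\beta}e^{-3\pi^2(N-\mathfrak{m})^{2(\beta-\alpha)}}.$$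
   Context: For $N\in\mathbb{N}$, $B_N=\{-N,-N+1,\dots,N-1\}\subset\mathbb{Z}$. Fourier coefficients of $f\in L^2([0,1];\mathbb{C}^m)$ are $\hat f(k)=\int_0^1 f(x)e^{-i2\pi kx}\,dx\in\mathbb{C}^m$. The function $f$ is $\mathfrak{m}$-Fourier bandlimited if $\hat f(k)=0$ for all $k\notin B_{\mathfrak{m}}$; such $f$ is identified with its continuous representative $\sum_{k\in B_{\mathfrak{m}}}\hat f(k)e^{i2\pi kx}$, regarded as a $1$-periodic function. The sampling function is $s_N(x)=\frac{1}{2N}\sum_{k=-N}^{N-1}e^{i2\pi kx}$. For $\sigma>0$, $\mathcal{G}_\sigma(x)=c(\sigma)\sum_{n\in\mathbb{Z}}e^{-n^2\sigma^{-2}/2}e^{i2\pi nx}$, where $c(\sigma)>0$ is the constant making $\mathcal{G}_\sigma(0)=1$. For $r\in(0,1/2)$, $\mathcal{G}_{r,\sigma}$ is the $1$-periodic function on $\mathbb{R}$ equal to $\mathcal{G}_\sigma(x)$ if $|x-k|\le r$ for some $k\in\mathbb{Z}$ and equal to $0$ otherwise. Arguments $x-j/2N$ are interpreted modulo $1$. *)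

theory Defs
  imports "HOL-Analysis.Analysis"
begin

text \<open>Bandlimited vector-valued functions on the circle, identified with their
continuous representative: f x = sum over k in B_M of fhat k * e^(i 2 pi k x).\<close>
definition bandlimited :: "nat \<Rightarrow> (real \<Rightarrow> complex ^ 'm) \<Rightarrow> bool" where
  "bandlimited M f \<longleftrightarrow> (\<exists>c :: int \<Rightarrow> complex ^ 'm.
     \<forall>x. f x = (\<Sum>k\<in>{- int M..int M - 1}. exp (\<i> * of_real (2 * pi * of_int k * x)) *s c k))"

definition sampling_fun :: "nat \<Rightarrow> real \<Rightarrow> complex" where
  "sampling_fun N x = (1 / (2 * of_nat N)) *
     (\<Sum>k\<in>{- int N..int N - 1}. exp (\<i> * of_real (2 * pi * of_int k * x)))"

definition gauss_series :: "real \<Rightarrow> real \<Rightarrow> complex" where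
  "gauss_series \<sigma> x = (\<Sum>\<^sub>\<infinity>n::int. of_real (exp (- (of_int n)\<^sup>2 / \<sigma>\<^sup>2 / 2))
                                  * exp (\<i> * of_real (2 * pi * of_int n * x)))"

definition periodic_gauss :: "real \<Rightarrow> real \<Rightarrow> complex" where
  "periodic_gauss \<sigma> x = gauss_series \<sigma> x / gauss_series \<sigma> 0"

definition trunc_gauss :: "real \<Rightarrow> real \<Rightarrow> real \<Rightarrow> complex" where
  "trunc_gauss r \<sigma> x = (if \<exists>k::int. \<bar>x - of_int k\<bar> \<le> r then periodic_gauss \<sigma> x else 0)"

definition reconstr :: "nat \<Rightarrow> real \<Rightarrow> real \<Rightarrow> (real \<Rightarrow> complex ^ 'm) \<Rightarrow> real \<Rightarrow> complex ^ 'm" where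
  "reconstr N r \<sigma> f x = (\<Sum>j<2 * N.
      (sampling_fun N (x - real j / (2 * real N)) * trunc_gauss r \<sigma> (x - real j / (2 * real N)))
        *s f (real j / (2 * real N)))"

definition L2norm01 :: "(real \<Rightarrow> complex ^ 'm) \<Rightarrow> real" where
  "L2norm01 g = sqrt (integral {0..1} (\<lambda>x. (norm (g x))\<^sup>2))"

definition err_tilde :: "nat \<Rightarrow> nat \<Rightarrow> real \<Rightarrow> real \<Rightarrow> real" where
  "err_tilde N M \<alpha> \<beta> =
     exp (- 3 * pi\<^sup>2 * (real N - real M) powr (2 * (1 - \<beta>))) * max 1 ((real N - real M) powr (2 * \<beta> - 1))
     + (real N - real M) powr (\<alpha> + \<beta>) * exp (- 3 * pi\<^sup>2 * (real N - real M) powr (2 * (\<beta> - \<alpha>)))"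

end

theory Submission
  imports Defs "HOL-Probability.Characteristic_Functions"
begin

definition ee :: "real \<Rightarrow> complex" where
  "ee t = exp (\<i> * complex_of_real (2 * pi * t))"

lemma norm_ee [simp]: "norm (ee t) = 1"
  unfolding ee_def by (simp add: norm_exp_i_times)

lemma ee_add: "ee (s + t) = ee s * ee t"
  unfolding ee_def by (simp add: distrib_left exp_add[symmetric] algebra_simps)

lemma ee_0 [simp]: "ee 0 = 1"
  unfolding ee_def by simp

lemma ee_int [simp]: "ee (of_int k) = 1"
proof -
  have "exp (\<i> * complex_of_real (2 * pi * of_int k)) = exp ((2 * of_int k * pi) * \<i>)"
    by (simp add: algebra_simps)
  also have "\<dots> = 1" by (rule exp_integer_2pi) simp
  finally show ?thesis unfolding ee_def .
qed

lemma ee_minus: "ee (- t) = cnj (ee t)"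
  unfolding ee_def by (simp add: exp_cnj)

lemma ee_minus': "ee (- t) * ee t = 1"
  by (metis add.left_inverse ee_0 ee_add)

lemma ee_periodic: "ee (t + of_int k) = ee t"
  by (simp add: ee_add)

lemma continuous_on_ee [continuous_intros]:
  "continuous_on A f \<Longrightarrow> continuous_on A (\<lambda>x. ee (f x))"
  unfolding ee_def by (intro continuous_intros)

lemma isCont_ee: "isCont ee x"
  unfolding ee_def by (intro continuous_intros)

lemma exp_eq_ee: "exp (\<i> * complex_of_real (2 * pi * of_int k * x)) = ee (of_int k * x)"
  unfolding ee_def by (simp add: mult.assoc)

lemma has_sum_int_split:
  fixes f :: "int \<Rightarrow> 'a::topological_comm_monoid_add"
  assumes "((\<lambda>n::nat. f (int n)) has_sum A) UNIV"
      and "((\<lambda>n::nat. f (- int n - 1)) has_sum B) UNIV"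
  shows "(f has_sum (A + B)) UNIV"
proof -
  have 1: "(f has_sum A) (range int)"
    using assms(1) by (subst has_sum_reindex) (auto simp: o_def)
  have i2: "inj (\<lambda>n::nat. - int n - 1)" by (auto intro: injI)
  have 2: "(f has_sum B) (range (\<lambda>n::nat. - int n - 1))"
    using assms(2) by (subst has_sum_reindex[OF i2]) (auto simp: o_def)
  have U: "range int \<union> range (\<lambda>n::nat. - int n - 1) = UNIV"
  proof -
    { fix z :: int
      have "z \<in> range int \<union> range (\<lambda>n::nat. - int n - 1)"
      proof (cases "z \<ge> 0")
        case True then show ?thesis by (auto intro!: image_eqI[of z int "nat z"])
      next
        case False then show ?thesis
          by (auto intro!: image_eqI[of z "\<lambda>n::nat. - int n - 1" "nat (- z - 1)"])
      qed }
    then show ?thesis by auto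
  qed
  have D: "range int \<inter> range (\<lambda>n::nat. - int n - 1) = {}" by auto
  show ?thesis using has_sum_Un_disjoint[OF 1 2 D] U by simp
qed

lemma geometric_int_has_sum:
  fixes \<rho> :: real
  assumes "0 \<le> \<rho>" "\<rho> < 1"
  shows "((\<lambda>n::int. \<rho> ^ nat \<bar>n\<bar>) has_sum (1 / (1 - \<rho>) + \<rho> / (1 - \<rho>))) UNIV"
proof (rule has_sum_int_split)
  show "((\<lambda>n::nat. \<rho> ^ nat \<bar>int n\<bar>) has_sum 1 / (1 - \<rho>)) UNIV"
    using geometric_sums[of \<rho>] assms by (intro sums_nonneg_imp_has_sum) auto
  have "(\<lambda>n::nat. \<rho> ^ nat \<bar>- int n - 1\<bar>) = (\<lambda>n. \<rho> * \<rho> ^ n)"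
    by (auto simp: nat_add_distrib)
  moreover have "(\<lambda>n. \<rho> * \<rho> ^ n) sums (\<rho> * (1 / (1 - \<rho>)))"
    using geometric_sums[of \<rho>] assms by (intro sums_mult) auto
  ultimately show "((\<lambda>n::nat. \<rho> ^ nat \<bar>- int n - 1\<bar>) has_sum \<rho> / (1 - \<rho>)) UNIV"
    using assms by (intro sums_nonneg_imp_has_sum) auto
qed

lemma gauss_int_summable:
  fixes b :: real
  assumes "b > 0"
  shows "(\<lambda>n::int. exp (- b * (of_int n)\<^sup>2)) summable_on UNIV"
proof (rule summable_on_comparison_test)
  show "(\<lambda>n::int. exp (-b) ^ nat \<bar>n\<bar>) summable_on UNIV"
    using geometric_int_has_sum[of "exp (-b)"] assms by (auto simp: has_sum_iff)
  fix n :: int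
  have "real (nat \<bar>n\<bar>) \<le> (of_int n)\<^sup>2"
  proof -
    have "\<bar>n\<bar> * 1 \<le> \<bar>n\<bar> * \<bar>n\<bar>" if "n \<noteq> 0" using that by (intro mult_left_mono) auto
    then have "\<bar>n\<bar> \<le> n\<^sup>2" by (cases "n = 0") (auto simp: power2_eq_square abs_mult_self_eq)
    then show ?thesis by (metis of_int_le_iff of_int_of_nat_eq of_int_power nat_0_le abs_ge_zero)
  qed
  then have "exp (- b * (of_int n)\<^sup>2) \<le> exp (- b * real (nat \<bar>n\<bar>))"
    using assms by simp
  also have "\<dots> = exp (-b) ^ nat \<bar>n\<bar>"
    by (simp add: exp_of_nat_mult[symmetric] mult.commute)
  finally show "exp (- b * (of_int n)\<^sup>2) \<le> exp (-b) ^ nat \<bar>n\<bar>" .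
qed auto

lemma has_sum_integral_uniform:
  fixes f :: "'i \<Rightarrow> real \<Rightarrow> 'c::banach"
  assumes bound: "\<And>i x. i \<in> X \<Longrightarrow> x \<in> {a..b} \<Longrightarrow> norm (f i x) \<le> Mb i"
      and summ: "Mb summable_on X"
      and cont: "\<And>i. continuous_on {a..b} (f i)"
  shows "((\<lambda>i. integral {a..b} (f i)) has_sum integral {a..b} (\<lambda>x. \<Sum>\<^sub>\<infinity>i\<in>X. f i x)) X"
    and "continuous_on {a..b} (\<lambda>x. \<Sum>\<^sub>\<infinity>i\<in>X. f i x)"
proof -
  have U: "uniform_limit {a..b} (\<lambda>F y. \<Sum>i\<in>F. f i y) (\<lambda>y. \<Sum>\<^sub>\<infinity>i\<in>X. f i y) (finite_subsets_at_top X)"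
    by (rule Weierstrass_m_test_general[OF bound summ])
  have C: "continuous_on {a..b} (\<lambda>y. \<Sum>i\<in>F. f i y)" for F
    by (intro continuous_intros cont)
  obtain I J where I: "\<And>F. ((\<lambda>y. \<Sum>i\<in>F. f i y) has_integral I F) {a..b}"
    and J: "((\<lambda>x. \<Sum>\<^sub>\<infinity>i\<in>X. f i x) has_integral J) {a..b}"
    and lim: "(I \<longlongrightarrow> J) (finite_subsets_at_top X)"
    using uniform_limit_integral[OF U C] by auto
  have IF: "I F = (\<Sum>i\<in>F. integral {a..b} (f i))" for F
  proof -
    have "I F = integral {a..b} (\<lambda>y. \<Sum>i\<in>F. f i y)" using I[of F] by (simp add: integral_unique)
    also have "\<dots> = (\<Sum>i\<in>F. integral {a..b} (f i))"
    proof (cases "finite F")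
      case True then show ?thesis
        by (intro integral_sum) (auto intro: integrable_continuous_real cont)
    qed simp
    finally show ?thesis .
  qed
  show "((\<lambda>i. integral {a..b} (f i)) has_sum integral {a..b} (\<lambda>x. \<Sum>\<^sub>\<infinity>i\<in>X. f i x)) X"
  proof -
    have "I = (\<lambda>F. \<Sum>i\<in>F. integral {a..b} (f i))" using IF by auto
    then show ?thesis unfolding has_sum_def using lim J by (simp add: integral_unique)
  qed
  show "continuous_on {a..b} (\<lambda>x. \<Sum>\<^sub>\<infinity>i\<in>X. f i x)"
    by (rule uniform_limit_theorem[OF _ U]) (auto intro: C always_eventually)
qed

lemma std_char_lborel:
  "(LINT x|lborel. std_normal_density x *\<^sub>R iexp (t * x)) = complex_of_real (exp (- (t^2) / 2))"
proof -
  have "char std_normal_distribution t = complex_of_real (exp (- (t^2) / 2))"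
    by (simp add: char_std_normal_distribution)
  moreover have "char std_normal_distribution t = (LINT x|lborel. std_normal_density x *\<^sub>R iexp (t * x))"
    unfolding char_def
    by (subst integral_density) (auto simp: normal_density_nonneg)
  ultimately show ?thesis by simp
qed

lemma std_char_integrable:
  "integrable lborel (\<lambda>x. std_normal_density x *\<^sub>R iexp (t * x))"
proof (rule Bochner_Integration.integrable_bound[OF integrable_normal_density[of 1 0]])
  show "(\<lambda>x. std_normal_density x *\<^sub>R iexp (t * x)) \<in> borel_measurable lborel" by measurable
  show "AE x in lborel. norm (std_normal_density x *\<^sub>R iexp (t * x)) \<le> norm (std_normal_density x)"
    by (auto simp: norm_exp_i_times normal_density_nonneg)
qed simp

lemma gauss_ft:
  fixes a m :: real
  assumes a: "a > 0"
  shows "integrable lborel (\<lambda>u. complex_of_real (exp (- a * u\<^sup>2)) * ee (- (m * u)))"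
    and "(LINT u|lborel. complex_of_real (exp (- a * u\<^sup>2)) * ee (- (m * u)))
           = complex_of_real (sqrt (pi / a) * exp (- pi\<^sup>2 * m\<^sup>2 / a))"
proof -
  define b where "b = sqrt (2 * a)"
  have b: "b > 0" using a by (simp add: b_def)
  have b2: "b\<^sup>2 = 2 * a" using a by (simp add: b_def)
  define t where "t = - 2 * pi * m / b"
  define F where "F = (\<lambda>x. std_normal_density x *\<^sub>R iexp (t * x))"
  have Fb: "F (0 + b * u) = complex_of_real (1 / sqrt (2 * pi)) * (complex_of_real (exp (- a * u\<^sup>2)) * ee (- (m * u)))" for u
  proof -
    have 1: "std_normal_density (b * u) = (1 / sqrt (2 * pi)) * exp (- a * u\<^sup>2)"
      unfolding std_normal_density_def using b2 by (simp add: power_mult_distrib)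
    have 2: "exp (\<i> * (complex_of_real t * (complex_of_real b * complex_of_real u))) = ee (- (m * u))"
      unfolding t_def ee_def using b by (simp add: field_simps)
    have "F (0 + b * u) = std_normal_density (b * u) *\<^sub>R iexp (t * (b * u))" by (simp add: F_def)
    also have "\<dots> = complex_of_real (1 / sqrt (2 * pi)) * (complex_of_real (exp (- a * u\<^sup>2)) * ee (- (m * u)))"
      by (simp only: 1 scaleR_conv_of_real of_real_mult mult.assoc 2)
    finally show ?thesis .
  qed
  have Fb': "F (b * u) = complex_of_real (1 / sqrt (2 * pi)) * (complex_of_real (exp (- a * u\<^sup>2)) * ee (- (m * u)))" for u
    using Fb[of u] by simp
  have intF: "integrable lborel F" unfolding F_def by (rule std_char_integrable)
  have intFb: "integrable lborel (\<lambda>u. F (0 + b * u))"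
    using intF lborel_integrable_real_affine_iff[of b F 0] b by simp
  show int: "integrable lborel (\<lambda>u. complex_of_real (exp (- a * u\<^sup>2)) * ee (- (m * u)))"
  proof -
    have "integrable lborel (\<lambda>u. complex_of_real (sqrt (2 * pi)) * F (0 + b * u))"
      using intFb by (intro integrable_mult_right)
    moreover have "(\<lambda>u. complex_of_real (sqrt (2 * pi)) * F (0 + b * u)) =
       (\<lambda>u. complex_of_real (exp (- a * u\<^sup>2)) * ee (- (m * u)))"
      by (auto simp: Fb')
    ultimately show ?thesis by simp
  qed
  have "integral\<^sup>L lborel F = b *\<^sub>R integral\<^sup>L lborel (\<lambda>u. F (0 + b * u))"
    using lborel_integral_real_affine[of b F 0] b by simp
  also have "integral\<^sup>L lborel (\<lambda>u. F (0 + b * u)) =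
     complex_of_real (1 / sqrt (2 * pi)) * (LINT u|lborel. complex_of_real (exp (- a * u\<^sup>2)) * ee (- (m * u)))"
    by (simp add: Fb')
  finally have eq: "integral\<^sup>L lborel F = b *\<^sub>R (complex_of_real (1 / sqrt (2 * pi)) *
       (LINT u|lborel. complex_of_real (exp (- a * u\<^sup>2)) * ee (- (m * u))))" .
  have "integral\<^sup>L lborel F = complex_of_real (exp (- (t^2) / 2))"
    unfolding F_def by (rule std_char_lborel)
  also have "t^2 / 2 = pi\<^sup>2 * m\<^sup>2 / a"
    unfolding t_def using b2 a by (simp add: power_divide power_mult_distrib field_simps)
  then have "- (t^2) / 2 = - (pi\<^sup>2 * m\<^sup>2 / a)" by simp
  finally have eq2: "integral\<^sup>L lborel F = complex_of_real (exp (- (pi\<^sup>2 * m\<^sup>2 / a)))" .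
  have sq: "sqrt (2 * pi) / b = sqrt (pi / a)"
    unfolding b_def using a by (simp add: real_sqrt_divide[symmetric])
  have "(LINT u|lborel. complex_of_real (exp (- a * u\<^sup>2)) * ee (- (m * u)))
      = complex_of_real (sqrt (2 * pi) / b) * integral\<^sup>L lborel F"
    unfolding eq using b by (simp add: scaleR_conv_of_real field_simps)
  also have "\<dots> = complex_of_real (sqrt (pi / a) * exp (- pi\<^sup>2 * m\<^sup>2 / a))"
    unfolding eq2 sq by simp
  finally show "(LINT u|lborel. complex_of_real (exp (- a * u\<^sup>2)) * ee (- (m * u)))
           = complex_of_real (sqrt (pi / a) * exp (- pi\<^sup>2 * m\<^sup>2 / a))" .
qed

definition tp :: "(complex \<times> int) list \<Rightarrow> real \<Rightarrow> complex" where
  "tp xs y = (\<Sum>p\<leftarrow>xs. fst p * ee (of_int (snd p) * y))"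

lemma tp_Nil [simp]: "tp [] y = 0" by (simp add: tp_def)
lemma tp_Cons [simp]: "tp (p # xs) y = fst p * ee (of_int (snd p) * y) + tp xs y"
  by (simp add: tp_def)
lemma tp_append: "tp (xs @ ys) y = tp xs y + tp ys y" by (simp add: tp_def)

definition tp_mult :: "(complex \<times> int) list \<Rightarrow> (complex \<times> int) list \<Rightarrow> (complex \<times> int) list" where
  "tp_mult xs ys = concat (map (\<lambda>p. map (\<lambda>q. (fst p * fst q, snd p + snd q)) ys) xs)"

lemma tp_mult_aux:
  "tp (map (\<lambda>q. (c * fst q, n + snd q)) ys) y = c * ee (of_int n * y) * tp ys y"
  by (induction ys) (simp_all add: algebra_simps ee_add)

lemma tp_mult: "tp (tp_mult xs ys) y = tp xs y * tp ys y"
  unfolding tp_mult_def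
  by (induction xs) (simp_all add: tp_append tp_mult_aux algebra_simps)

lemma continuous_on_tp: "continuous_on A (tp xs)"
proof (induction xs)
  case Nil then show ?case by (simp add: tp_def)
next
  case (Cons p xs)
  have "tp (p # xs) = (\<lambda>y. fst p * ee (of_int (snd p) * y) + tp xs y)" by auto
  then show ?case using Cons by (auto intro!: continuous_intros)
qed

lemma bounded_linear_decomp:
  fixes g :: "complex \<Rightarrow> real"
  assumes "bounded_linear g"
  shows "g z = Re z * g 1 + Im z * g \<i>"
proof -
  interpret bounded_linear g by fact
  have "z = Re z *\<^sub>R 1 + Im z *\<^sub>R \<i>" by (simp add: complex_eq_iff)
  then have "g z = g (Re z *\<^sub>R 1 + Im z *\<^sub>R \<i>)" by simp
  also have "\<dots> = Re z * g 1 + Im z * g \<i>" by (simp add: add scaleR)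
  finally show ?thesis .
qed

lemma real_poly_tp:
  fixes g :: "complex \<Rightarrow> real"
  assumes "real_polynomial_function g"
  shows "\<exists>xs. \<forall>y. complex_of_real (g (ee y)) = tp xs y"
  using assms
proof (induction rule: real_polynomial_function.induct)
  case (linear g)
  define g1 where "g1 = complex_of_real (g 1)"
  define gi where "gi = complex_of_real (g \<i>)"
  show ?case
  proof (intro exI allI)
    fix y
    have e: "ee (- y) = cnj (ee y)" by (rule ee_minus)
    have re: "complex_of_real (Re (ee y)) = (ee y + ee (- y)) / 2"
      unfolding e complex_add_cnj by simp
    have im: "complex_of_real (Im (ee y)) = (ee y - ee (- y)) * (- \<i>) / 2"
      unfolding e complex_diff_cnj by (simp add: algebra_simps)
    have "complex_of_real (g (ee y)) = complex_of_real (Re (ee y)) * g1 + complex_of_real (Im (ee y)) * gi"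
      unfolding g1_def gi_def by (subst bounded_linear_decomp[OF linear]) simp
    also have "\<dots> = tp [((g1 - \<i> * gi) / 2, 1), ((g1 + \<i> * gi) / 2, -1)] y"
      unfolding re im by (simp add: field_simps)
    finally show "complex_of_real (g (ee y)) = tp [((g1 - \<i> * gi) / 2, 1), ((g1 + \<i> * gi) / 2, -1)] y" .
  qed
next
  case (const c)
  show ?case by (rule exI[of _ "[(complex_of_real c, 0)]"]) simp
next
  case (add f g)
  then obtain xs ys where "\<forall>y. complex_of_real (f (ee y)) = tp xs y" "\<forall>y. complex_of_real (g (ee y)) = tp ys y"
    by blast
  then show ?case by (intro exI[of _ "xs @ ys"]) (simp add: tp_append)
next
  case (mult f g)
  then obtain xs ys where "\<forall>y. complex_of_real (f (ee y)) = tp xs y" "\<forall>y. complex_of_real (g (ee y)) = tp ys y"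
    by blast
  then show ?case by (intro exI[of _ "tp_mult xs ys"]) (simp add: tp_mult)
qed

lemma poly_tp:
  fixes p :: "complex \<Rightarrow> complex"
  assumes "polynomial_function p"
  shows "\<exists>xs. \<forall>y. p (ee y) = tp xs y"
proof -
  have "real_polynomial_function (Re \<circ> p)" "real_polynomial_function (Im \<circ> p)"
    using assms unfolding polynomial_function_def by (auto intro: bounded_linear_Re bounded_linear_Im)
  then obtain xs ys where xs: "\<forall>y. complex_of_real (Re (p (ee y))) = tp xs y"
     and ys: "\<forall>y. complex_of_real (Im (p (ee y))) = tp ys y"
    using real_poly_tp by (metis comp_apply)
  show ?thesis
  proof (intro exI allI)
    fix y
    have "p (ee y) = complex_of_real (Re (p (ee y))) + tp [(\<i>, 0)] y * complex_of_real (Im (p (ee y)))"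
      by (simp add: complex_eq_iff)
    also have "\<dots> = tp (xs @ tp_mult [(\<i>, 0)] ys) y"
      using xs ys by (simp add: tp_append tp_mult)
    finally show "p (ee y) = tp (xs @ tp_mult [(\<i>, 0)] ys) y" .
  qed
qed

lemma periodic_int:
  fixes H :: "real \<Rightarrow> 'a"
  assumes per: "\<And>x. H (x + 1) = H x"
  shows "H (x + of_int k) = H x"
proof (induction k rule: int_induct[where k=0])
  case base then show ?case by simp
next
  case (step1 i) then show ?case using per[of "x + of_int i"] by (simp add: add.assoc)
next
  case (step2 i) then show ?case using per[of "x + of_int (i - 1)"] by (simp add: add.assoc)
qed

lemma exp_arg_periodic:
  fixes H :: "real \<Rightarrow> 'a"
  assumes per: "\<And>x. H (x + 1) = H x"
    and eq: "exp (\<i> * complex_of_real t) = ee y"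
  shows "H (t / (2 * pi)) = H y"
proof -
  from eq have "exp (\<i> * complex_of_real t) = exp (\<i> * complex_of_real (2 * pi * y))"
    by (simp add: ee_def)
  then obtain n :: int where n: "\<i> * complex_of_real t = \<i> * complex_of_real (2 * pi * y) + of_int (2 * n) * pi * \<i>"
    unfolding exp_eq by blast
  then have "\<i> * complex_of_real t = \<i> * complex_of_real (2 * pi * y + 2 * pi * of_int n)"
    by (simp add: algebra_simps)
  then have "complex_of_real t = complex_of_real (2 * pi * y + 2 * pi * of_int n)"
    by simp
  then have "t = 2 * pi * y + 2 * pi * of_int n" using of_real_eq_iff by blast
  then have "t / (2 * pi) = y + of_int n" by (simp add: field_simps)
  then show ?thesis using periodic_int[where H=H, OF per] by simp
qed

lemma fourier_unique:
  fixes H :: "real \<Rightarrow> complex"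
  assumes cont: "\<And>x. isCont H x"
    and per: "\<And>x. H (x + 1) = H x"
    and coef: "\<And>n::int. integral {0..1} (\<lambda>x. H x * ee (of_int n * x)) = 0"
  shows "H x = 0"
proof -
  have contH: "continuous_on A H" for A by (simp add: cont continuous_at_imp_continuous_on)
  have inttp: "integral {0..1} (\<lambda>y. H y * tp xs y) = 0" for xs
  proof (induction xs)
    case Nil then show ?case by simp
  next
    case (Cons p xs)
    have "integral {0..1} (\<lambda>y. H y * tp (p # xs) y) =
          integral {0..1} (\<lambda>y. fst p * (H y * ee (of_int (snd p) * y)) + H y * tp xs y)"
      by (simp add: algebra_simps)
    also have "\<dots> = fst p * integral {0..1} (\<lambda>y. H y * ee (of_int (snd p) * y)) + integral {0..1} (\<lambda>y. H y * tp xs y)"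
      by (subst integral_add) (auto intro!: integrable_continuous_real continuous_intros contH continuous_on_tp)
    also have "\<dots> = 0" using Cons coef by simp
    finally show ?case .
  qed
  define hc where "hc = (\<lambda>z. cnj (H (Arg z / (2 * pi))))"
  define hc2 where "hc2 = (\<lambda>z. cnj (H (Arg2pi z / (2 * pi))))"
  have hc_ee: "hc (ee y) = cnj (H y)" for y
  proof -
    have "ee y \<noteq> 0" by (metis norm_ee norm_zero zero_neq_one)
    have "exp (\<i> * complex_of_real (Arg (ee y))) = ee y"
      using cis_Arg[OF \<open>ee y \<noteq> 0\<close>] by (simp add: cis_conv_exp sgn_div_norm)
    then have "H (Arg (ee y) / (2 * pi)) = H y" by (rule exp_arg_periodic[where H=H, OF per])
    then show ?thesis unfolding hc_def by simp
  qed
  have hc_hc2: "hc z = hc2 z" if "z \<in> sphere 0 1" for z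
  proof -
    from that have z0: "z \<noteq> 0" and nz: "norm z = 1" by auto
    have "exp (\<i> * complex_of_real (Arg z)) = z"
      using cis_Arg[OF z0] nz by (simp add: cis_conv_exp sgn_div_norm)
    moreover have "exp (\<i> * complex_of_real (Arg2pi z)) = z"
      using Arg2pi_eq[of z] nz by simp
    ultimately have "exp (\<i> * complex_of_real (Arg2pi z)) = ee (Arg z / (2 * pi))"
      by (simp add: ee_def)
    then have "H (Arg2pi z / (2 * pi)) = H (Arg z / (2 * pi))"
      by (rule exp_arg_periodic[where H=H, OF per])
    then show ?thesis by (simp add: hc_def hc2_def)
  qed
  have conthc: "continuous_on (sphere 0 1) hc"
  proof (rule continuous_on_eq_continuous_within[THEN iffD2], intro ballI)
    fix z :: complex assume z: "z \<in> sphere 0 1"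
    show "continuous (at z within sphere 0 1) hc"
    proof (cases "z \<in> \<real>\<^sub>\<le>\<^sub>0")
      case False
      have "isCont (\<lambda>z. Arg z / (2 * pi)) z"
        using continuous_at_Arg[OF False] by (intro continuous_intros) (auto simp: pi_gt_zero)
      then have "isCont (\<lambda>z. H (Arg z / (2 * pi))) z" by (rule isCont_o2[OF _ cont])
      then have "isCont hc z" unfolding hc_def by (rule continuous_cnj)
      then show ?thesis by (rule continuous_at_imp_continuous_within)
    next
      case True
      with z have "z \<notin> \<real>\<^sub>\<ge>\<^sub>0"
        by (auto simp: nonpos_Reals_def nonneg_Reals_def)
      have "isCont (\<lambda>z. Arg2pi z / (2 * pi)) z"
        using continuous_at_Arg2pi[OF \<open>z \<notin> \<real>\<^sub>\<ge>\<^sub>0\<close>] by (intro continuous_intros) auto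
      then have "isCont (\<lambda>z. H (Arg2pi z / (2 * pi))) z" by (rule isCont_o2[OF _ cont])
      then have "isCont hc2 z" unfolding hc2_def by (rule continuous_cnj)
      then have "continuous (at z within sphere 0 1) hc2" by (rule continuous_at_imp_continuous_within)
      then show ?thesis
        by (rule continuous_transform_within[of _ _ _ 1]) (use z hc_hc2 in auto)
    qed
  qed
  have contH01: "continuous_on {0..1} H" by (rule contH)
  obtain B where B: "B > 0" "\<And>y. y \<in> {0..1} \<Longrightarrow> norm (H y) \<le> B"
  proof -
    have "bounded (H ` {0..1})"
      by (intro compact_imp_bounded compact_continuous_image contH01) auto
    then show ?thesis using that by (auto simp: bounded_pos)
  qed
  define I where "I = integral {0..1} (\<lambda>y. H y * cnj (H y))"
  have Ibound: "norm I \<le> e * B" if e: "e > 0" for e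
  proof -
    obtain p where p: "polynomial_function p" and pe: "\<And>z. z \<in> sphere 0 1 \<Longrightarrow> norm (hc z - p z) < e"
      using Stone_Weierstrass_polynomial_function[OF compact_sphere conthc e] by blast
    obtain xs where xs: "\<And>y. p (ee y) = tp xs y" using poly_tp[OF p] by blast
    have close: "norm (cnj (H y) - tp xs y) \<le> e" for y
    proof -
      have "ee y \<in> sphere 0 1" by simp
      then show ?thesis using pe[of "ee y"] by (simp add: hc_ee xs)
    qed
    have "I = integral {0..1} (\<lambda>y. H y * (cnj (H y) - tp xs y) + H y * tp xs y)"
      unfolding I_def by (simp add: algebra_simps)
    also have "\<dots> = integral {0..1} (\<lambda>y. H y * (cnj (H y) - tp xs y)) + integral {0..1} (\<lambda>y. H y * tp xs y)"
      by (subst integral_add) (auto intro!: integrable_continuous_real continuous_intros contH continuous_on_tp)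
    also have "\<dots> = integral {0..1} (\<lambda>y. H y * (cnj (H y) - tp xs y))" using inttp by simp
    finally have "norm I = norm (integral {0..1} (\<lambda>y. H y * (cnj (H y) - tp xs y)))" by simp
    also have "\<dots> \<le> (B * e) * (1 - 0)"
    proof (rule integral_bound)
      show "continuous_on {0..1} (\<lambda>y. H y * (cnj (H y) - tp xs y))"
        by (auto intro!: continuous_intros contH continuous_on_tp)
      fix t :: real assume t: "t \<in> {0..1}"
      have "norm (H t * (cnj (H t) - tp xs t)) = norm (H t) * norm (cnj (H t) - tp xs t)" by (simp add: norm_mult)
      also have "\<dots> \<le> B * e" using B(2)[OF t] close[of t] B e by (intro mult_mono) auto
      finally show "norm (H t * (cnj (H t) - tp xs t)) \<le> B * e" .
    qed simp
    finally show ?thesis by (simp add: mult.commute)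
  qed
  have I0: "I = 0"
  proof (rule ccontr)
    assume "I \<noteq> 0"
    then have pos: "norm I > 0" by simp
    have "norm I \<le> (norm I / (2 * B)) * B" using Ibound[of "norm I / (2 * B)"] pos B by simp
    also have "\<dots> = norm I / 2" using B by simp
    finally show False using pos by simp
  qed
  have hi: "((\<lambda>y. H y * cnj (H y)) has_integral I) {0..1}"
    unfolding I_def by (auto intro!: integrable_integral integrable_continuous_real continuous_intros contH)
  have "((\<lambda>y. Re (H y * cnj (H y))) has_integral Re I) {0..1}"
    by (rule has_integral_Re[OF hi])
  moreover have "Re (H y * cnj (H y)) = (norm (H y))\<^sup>2" for y
    by (metis Re_complex_of_real complex_norm_square)
  ultimately have hi2: "((\<lambda>y. (norm (H y))\<^sup>2) has_integral 0) (cbox 0 1)"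
    using I0 by simp
  have zero01: "H y = 0" if y: "y \<in> {0..1}" for y
  proof -
    have "(norm (H y))\<^sup>2 = 0"
      by (rule has_integral_0_cbox_imp_0[OF _ _ hi2]) (use y in \<open>auto intro!: continuous_intros contH\<close>)
    then show ?thesis by simp
  qed
  have "H x = H ((x - of_int \<lfloor>x\<rfloor>) + of_int \<lfloor>x\<rfloor>)" by simp
  also have "\<dots> = H (x - of_int \<lfloor>x\<rfloor>)" by (rule periodic_int[where H=H, OF per])
  also have "\<dots> = 0" by (rule zero01) (use frac_lt_1[of x] frac_ge_0[of x] in \<open>auto simp: frac_def\<close>)
  finally show ?thesis .
qed

lemma ee_has_vector_derivative:
  "((\<lambda>x. ee (c * x)) has_vector_derivative (complex_of_real (2 * pi * c) * \<i> * ee (c * x))) (at x within S)"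
  unfolding ee_def
  by (auto intro!: derivative_eq_intros simp: Re_exp Im_exp has_vector_derivative_complex_iff algebra_simps)

lemma int_ee:
  "integral {0..1} (\<lambda>x. ee (of_int k * x)) = (if k = 0 then 1 else 0)"
proof (cases "k = 0")
  case True then show ?thesis by simp
next
  case False
  define c where "c = complex_of_real (2 * pi * of_int k) * \<i>"
  have c0: "c \<noteq> 0" using False by (simp add: c_def)
  have "((\<lambda>x. ee (of_int k * x)) has_integral (ee (of_int k * 1) / c - ee (of_int k * 0) / c)) {0..1}"
  proof (rule fundamental_theorem_of_calculus)
    fix x :: real assume "x \<in> {0..1}"
    have "((\<lambda>x. ee (of_int k * x) / c) has_vector_derivative (c * ee (of_int k * x)) / c) (at x within {0..1})"
      unfolding c_def by (intro has_vector_derivative_divide ee_has_vector_derivative)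
    then show "((\<lambda>x. ee (of_int k * x) / c) has_vector_derivative ee (of_int k * x)) (at x within {0..1})"
      using c0 by simp
  qed simp
  then show ?thesis using False by (simp add: integral_unique)
qed

lemma summable_by_real:
  fixes f :: "'a \<Rightarrow> 'b::banach" and g :: "'a \<Rightarrow> real"
  assumes "g summable_on A" "\<And>x. x \<in> A \<Longrightarrow> norm (f x) \<le> g x"
  shows "f summable_on A"
proof -
  have "(\<lambda>x. norm (f x)) summable_on A"
    by (rule summable_on_comparison_test[OF assms(1)]) (use assms(2) in auto)
  then show ?thesis by (rule abs_summable_summable)
qed

definition qg :: "real \<Rightarrow> int \<Rightarrow> real" where
  "qg \<sigma> n = exp (- (of_int n)\<^sup>2 / \<sigma>\<^sup>2 / 2)"

lemma qg_pos: "qg \<sigma> n > 0" by (simp add: qg_def)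

lemma qg_summable: assumes "\<sigma> > 0" shows "qg \<sigma> summable_on UNIV"
proof -
  have "(\<lambda>n::int. exp (- (1 / (2 * \<sigma>\<^sup>2)) * (of_int n)\<^sup>2)) summable_on UNIV"
    using assms by (intro gauss_int_summable) simp
  moreover have "(\<lambda>n::int. exp (- (1 / (2 * \<sigma>\<^sup>2)) * (of_int n)\<^sup>2)) = qg \<sigma>"
    by (auto simp: qg_def fun_eq_iff field_simps)
  ultimately show ?thesis by simp
qed

lemma gauss_series_eq:
  "gauss_series \<sigma> x = (\<Sum>\<^sub>\<infinity>n. complex_of_real (qg \<sigma> n) * ee (of_int n * x))"
  unfolding gauss_series_def qg_def exp_eq_ee ..

lemma theta_facts:
  assumes s: "\<sigma> > 0"
  shows "isCont (gauss_series \<sigma>) x"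
    and "gauss_series \<sigma> (x + 1) = gauss_series \<sigma> x"
    and "integral {0..1} (\<lambda>x. gauss_series \<sigma> x * ee (of_int m * x)) = complex_of_real (qg \<sigma> m)"
proof -
  have summ: "qg \<sigma> summable_on UNIV" by (rule qg_summable[OF s])
  have bd: "norm (complex_of_real (qg \<sigma> n) * ee (of_int n * x)) \<le> qg \<sigma> n" for n x
    by (simp add: norm_mult qg_def)
  have cont: "continuous_on {x - 1..x + 1} (gauss_series \<sigma>)"
    unfolding gauss_series_eq
    by (rule has_sum_integral_uniform(2)[OF bd summ]) (auto intro!: continuous_intros)
  show "isCont (gauss_series \<sigma>) x"
    by (rule continuous_on_interior[OF cont]) auto
  show "gauss_series \<sigma> (x + 1) = gauss_series \<sigma> x"
    unfolding gauss_series_eq by (simp add: distrib_left ee_add mult.commute[of _ 1])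
  have bd2: "norm (complex_of_real (qg \<sigma> n) * ee (of_int n * x) * ee (of_int m * x)) \<le> qg \<sigma> n" for n x
    by (simp add: norm_mult qg_def)
  have hs: "((\<lambda>n. integral {0..1} (\<lambda>x. complex_of_real (qg \<sigma> n) * ee (of_int n * x) * ee (of_int m * x))) has_sum
      integral {0..1} (\<lambda>x. \<Sum>\<^sub>\<infinity>n. complex_of_real (qg \<sigma> n) * ee (of_int n * x) * ee (of_int m * x))) UNIV"
    by (rule has_sum_integral_uniform(1)[OF bd2 summ]) (auto intro!: continuous_intros)
  have sumx: "(\<Sum>\<^sub>\<infinity>n. complex_of_real (qg \<sigma> n) * ee (of_int n * x) * ee (of_int m * x)) = gauss_series \<sigma> x * ee (of_int m * x)" for x
  proof -
    have "(\<lambda>n. complex_of_real (qg \<sigma> n) * ee (of_int n * x)) summable_on UNIV"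
      by (rule summable_by_real[OF summ]) (simp add: norm_mult qg_def)
    then show ?thesis unfolding gauss_series_eq by (intro infsum_cmult_left)
  qed
  have termn: "integral {0..1} (\<lambda>x. complex_of_real (qg \<sigma> n) * ee (of_int n * x) * ee (of_int m * x)) =
     (if n = - m then complex_of_real (qg \<sigma> m) else 0)" for n
  proof -
    have "(\<lambda>x. complex_of_real (qg \<sigma> n) * ee (of_int n * x) * ee (of_int m * x)) =
          (\<lambda>x. complex_of_real (qg \<sigma> n) * ee (of_int (n + m) * x))"
      by (auto simp: ee_add[symmetric] algebra_simps)
    then have "integral {0..1} (\<lambda>x. complex_of_real (qg \<sigma> n) * ee (of_int n * x) * ee (of_int m * x)) =
       complex_of_real (qg \<sigma> n) * integral {0..1} (\<lambda>x. ee (of_int (n + m) * x))"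
      by (simp only: integral_mult_right)
    also have "\<dots> = (if n = - m then complex_of_real (qg \<sigma> m) else 0)"
      unfolding int_ee by (auto simp: qg_def)
    finally show ?thesis .
  qed
  have "((\<lambda>n::int. if n = - m then complex_of_real (qg \<sigma> m) else 0) has_sum complex_of_real (qg \<sigma> m)) UNIV"
  proof -
    have "((\<lambda>n::int. if n = - m then complex_of_real (qg \<sigma> m) else 0) has_sum complex_of_real (qg \<sigma> m)) {-m}"
      by (rule has_sum_finiteI) auto
    then show ?thesis by (subst (asm) has_sum_cong_neutral[where T=UNIV]) auto
  qed
  then show "integral {0..1} (\<lambda>x. gauss_series \<sigma> x * ee (of_int m * x)) = complex_of_real (qg \<sigma> m)"
    using hs unfolding sumx termn by (metis has_sum_unique)
qed

lemma lint_unit_interval: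
  fixes g :: "real \<Rightarrow> complex"
  assumes cont: "continuous_on UNIV g"
  shows "(LINT x:{of_int k..<of_int k + 1}|lborel. g x) = integral {0..1} (\<lambda>y. g (y + of_int k))"
proof -
  have gm: "g \<in> borel_measurable lborel"
    using borel_measurable_continuous_on[OF cont, of "\<lambda>x. x" lborel] by simp
  have "(LINT x:{of_int k..<of_int k + 1}|lborel. g x) = (LINT x:{of_int k..of_int k + 1}|lborel. g x)"
  proof (rule set_integral_cong_set)
    show "set_borel_measurable lborel {of_int k..of_int k + 1} g"
      using gm unfolding set_borel_measurable_def by measurable
    show "set_borel_measurable lborel {of_int k..<of_int k + 1} g"
      using gm unfolding set_borel_measurable_def by measurable
    show "AE x in lborel. ((x::real) \<in> {of_int k..of_int k + 1}) = (x \<in> {of_int k..<of_int k + 1})"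
      by (rule eventually_mono[OF AE_lborel_singleton[of "of_int k + 1 :: real"]]) auto
  qed
  also have "\<dots> = integral {of_int k..of_int k + 1} g"
    by (rule set_borel_integral_eq_integral(2)[OF borel_integrable_atLeastAtMost'])
       (rule continuous_on_subset[OF cont], auto)
  also have "\<dots> = integral {0 + of_int k..1 + of_int k} g" by (simp add: add.commute)
  also have "\<dots> = integral {0..1} (g \<circ> (+) (of_int k))" by (rule integral_shift_Icc_real[symmetric])
  also have "\<dots> = integral {0..1} (\<lambda>y. g (y + of_int k))" by (simp add: o_def add.commute)
  finally show ?thesis .
qed

lemma shift_sum_lebesgue:
  fixes g :: "real \<Rightarrow> complex"
  assumes int: "integrable lborel g" and cont: "continuous_on UNIV g"
    and hs: "((\<lambda>k::int. integral {0..1} (\<lambda>y. g (y + of_int k))) has_sum S) UNIV"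
  shows "S = (LINT u|lborel. g u)"
proof -
  define A where "A = (\<lambda>i. {real_of_int (int_decode i)..<real_of_int (int_decode i) + 1})"
  have fl: "x \<in> A i \<longleftrightarrow> \<lfloor>x\<rfloor> = int_decode i" for x i
    unfolding A_def by (simp add: floor_eq_iff)
  have disj: "A i \<inter> A j = {}" if "i \<noteq> j" for i j
    using that by (auto simp: fl int_decode_eq)
  have un: "(\<Union>i. A i) = UNIV"
  proof -
    { fix x :: real
      have "x \<in> A (int_encode \<lfloor>x\<rfloor>)" by (simp add: fl int_encode_inverse)
      then have "x \<in> (\<Union>i. A i)" by blast }
    then show ?thesis by auto
  qed
  have "(LINT x:(\<Union>i. A i)|lborel. g x) = (\<Sum>i. (LINT x:(A i)|lborel. g x))"
  proof (rule lebesgue_integral_countable_add)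
    show "A i \<in> sets lborel" for i by (simp add: A_def)
    show "A i \<inter> A j = {}" if "i \<noteq> j" for i j using disj that .
    show "set_integrable lborel (\<Union>i. A i) g" unfolding un set_integrable_def using int by simp
  qed
  also have "\<dots> = (\<Sum>i. integral {0..1} (\<lambda>y. g (y + of_int (int_decode i))))"
    unfolding A_def by (simp add: lint_unit_interval[OF cont])
  also have "\<dots> = S"
  proof -
    have "((\<lambda>i. integral {0..1} (\<lambda>y. g (y + of_int (int_decode i)))) has_sum S) UNIV"
      using hs has_sum_reindex_bij_betw[of int_decode UNIV UNIV
          "\<lambda>k. integral {0..1} (\<lambda>y. g (y + of_int k))" S] bij_int_decode by (simp add: bij_betw_def)
    then show ?thesis by (intro sums_unique[symmetric] has_sum_imp_sums)
  qed
  finally show ?thesis unfolding un set_lebesgue_integral_def by simp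
qed

definition Pr :: "real \<Rightarrow> real \<Rightarrow> real" where
  "Pr a y = (\<Sum>\<^sub>\<infinity>k::int. exp (- a * (y + of_int k)\<^sup>2))"

lemma P_term_bound:
  fixes a y R :: real and k :: int
  assumes a: "a > 0" and y: "\<bar>y\<bar> \<le> R"
  shows "exp (- a * (y + of_int k)\<^sup>2) \<le> exp (a * R\<^sup>2) * exp (- (a / 2) * (of_int k)\<^sup>2)"
proof -
  have e1: "(y + of_int k)\<^sup>2 + y\<^sup>2 - (of_int k)\<^sup>2 / 2 = 2 * (y + of_int k / 2)\<^sup>2"
    by (simp add: power2_eq_square algebra_simps)
  have 1: "(of_int k)\<^sup>2 / 2 \<le> (y + of_int k)\<^sup>2 + y\<^sup>2"
    using e1 zero_le_power2[of "y + of_int k / 2"] by linarith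
  have 2: "y\<^sup>2 \<le> R\<^sup>2" using y by (metis abs_le_square_iff abs_of_nonneg abs_ge_zero order_trans)
  have 3: "0 \<le> a * ((y + of_int k)\<^sup>2 + R\<^sup>2 - (of_int k)\<^sup>2 / 2)"
    using a 1 2 by (intro mult_nonneg_nonneg) auto
  have e3: "a * ((y + of_int k)\<^sup>2 + R\<^sup>2 - (of_int k)\<^sup>2 / 2) = (a * R\<^sup>2 + - (a / 2) * (of_int k)\<^sup>2) - (- a * (y + of_int k)\<^sup>2)"
    by (simp add: algebra_simps)
  have "- a * (y + of_int k)\<^sup>2 \<le> a * R\<^sup>2 + - (a / 2) * (of_int k)\<^sup>2"
    using 3 e3 by linarith
  then show ?thesis by (simp add: exp_add[symmetric])
qed

lemma P_majorant_summable:
  fixes a R :: real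
  assumes "a > 0"
  shows "(\<lambda>k::int. exp (a * R\<^sup>2) * exp (- (a / 2) * (of_int k)\<^sup>2)) summable_on UNIV"
  using assms by (intro summable_on_cmult_right gauss_int_summable) simp

lemma P_facts:
  assumes a: "a > 0"
  shows "(\<lambda>k::int. exp (- a * (y + of_int k)\<^sup>2)) summable_on UNIV"
    and "(\<Sum>\<^sub>\<infinity>k::int. complex_of_real (exp (- a * (y + of_int k)\<^sup>2))) = complex_of_real (Pr a y)"
    and "isCont (\<lambda>y. complex_of_real (Pr a y)) x"
    and "Pr a (y + 1) = Pr a y"
    and "integral {0..1} (\<lambda>y. complex_of_real (Pr a y) * ee (of_int m * y)) =
           complex_of_real (sqrt (pi / a) * exp (- pi\<^sup>2 * (of_int m)\<^sup>2 / a))"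
proof -
  have summ: "(\<lambda>k::int. exp (- a * (y + of_int k)\<^sup>2)) summable_on UNIV" for y
    by (rule summable_on_comparison_test[OF P_majorant_summable[OF a, of "\<bar>y\<bar>"]])
       (use P_term_bound[OF a, of y "\<bar>y\<bar>"] in auto)
  then show "(\<lambda>k::int. exp (- a * (y + of_int k)\<^sup>2)) summable_on UNIV" .
  have Pc: "(\<Sum>\<^sub>\<infinity>k::int. complex_of_real (exp (- a * (y + of_int k)\<^sup>2))) = complex_of_real (Pr a y)" for y
    unfolding Pr_def by (rule infsumI, rule has_sum_of_real, rule has_sum_infsum, rule summ)
  then show "(\<Sum>\<^sub>\<infinity>k::int. complex_of_real (exp (- a * (y + of_int k)\<^sup>2))) = complex_of_real (Pr a y)" .
  have bdR: "norm (complex_of_real (exp (- a * (y + of_int k)\<^sup>2))) \<le> exp (a * R\<^sup>2) * exp (- (a / 2) * (of_int k)\<^sup>2)"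
    if "\<bar>y\<bar> \<le> R" for y R k
    using P_term_bound[OF a that, of k] by simp
  have eqP: "(\<lambda>y. \<Sum>\<^sub>\<infinity>k::int. complex_of_real (exp (- a * (y + of_int k)\<^sup>2))) = (\<lambda>y. complex_of_real (Pr a y))"
    by (rule ext) (rule Pc)
  have "continuous_on {x - 1..x + 1} (\<lambda>y. \<Sum>\<^sub>\<infinity>k::int. complex_of_real (exp (- a * (y + of_int k)\<^sup>2)))"
    by (rule has_sum_integral_uniform(2)[OF bdR P_majorant_summable[OF a, of "\<bar>x\<bar> + 1"]])
       (auto intro!: continuous_intros)
  then have "continuous_on {x - 1..x + 1} (\<lambda>y. complex_of_real (Pr a y))" unfolding eqP .
  then show "isCont (\<lambda>y. complex_of_real (Pr a y)) x"
    by (rule continuous_on_interior) auto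
  show "Pr a (y + 1) = Pr a y"
  proof -
    have "Pr a (y + 1) = (\<Sum>\<^sub>\<infinity>k::int. exp (- a * (y + of_int (k + 1))\<^sup>2))"
      unfolding Pr_def by (simp add: add.assoc add.commute[of 1])
    also have "\<dots> = Pr a y"
      unfolding Pr_def
      by (rule infsum_reindex_bij_betw[of "\<lambda>k. k + 1" UNIV UNIV "\<lambda>k. exp (- a * (y + of_int k)\<^sup>2)"])
         (auto intro!: bij_betwI[of _ _ _ "\<lambda>k. k - 1"])
    finally show ?thesis .
  qed
  define g where "g = (\<lambda>u. complex_of_real (exp (- a * u\<^sup>2)) * ee (- (- of_int m * u)))"
  have intg: "integrable lborel g" unfolding g_def by (rule gauss_ft(1)[OF a])
  have contg: "continuous_on UNIV g" unfolding g_def by (intro continuous_intros)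
  have bd1: "norm (complex_of_real (exp (- a * (y + of_int k)\<^sup>2)) * ee (of_int m * y)) \<le> exp (a * 1\<^sup>2) * exp (- (a / 2) * (of_int k)\<^sup>2)"
    if "y \<in> {0..1}" for y k
    using P_term_bound[OF a, of y 1 k] that by (simp add: norm_mult)
  have hs: "((\<lambda>k. integral {0..1} (\<lambda>y. complex_of_real (exp (- a * (y + of_int k)\<^sup>2)) * ee (of_int m * y))) has_sum
     integral {0..1} (\<lambda>y. \<Sum>\<^sub>\<infinity>k::int. complex_of_real (exp (- a * (y + of_int k)\<^sup>2)) * ee (of_int m * y))) UNIV"
    by (rule has_sum_integral_uniform(1)[OF bd1 P_majorant_summable[OF a]]) (auto intro!: continuous_intros)
  have sumx: "(\<Sum>\<^sub>\<infinity>k::int. complex_of_real (exp (- a * (y + of_int k)\<^sup>2)) * ee (of_int m * y)) =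
      complex_of_real (Pr a y) * ee (of_int m * y)" for y
  proof -
    have "(\<lambda>k::int. complex_of_real (exp (- a * (y + of_int k)\<^sup>2))) summable_on UNIV"
      by (rule summable_on_of_real[OF summ])
    then have "(\<Sum>\<^sub>\<infinity>k::int. complex_of_real (exp (- a * (y + of_int k)\<^sup>2)) * ee (of_int m * y)) =
      (\<Sum>\<^sub>\<infinity>k::int. complex_of_real (exp (- a * (y + of_int k)\<^sup>2))) * ee (of_int m * y)"
      by (intro infsum_cmult_left)
    then show ?thesis unfolding Pc .
  qed
  have gshift: "(\<lambda>y. g (y + of_int k)) = (\<lambda>y. complex_of_real (exp (- a * (y + of_int k)\<^sup>2)) * ee (of_int m * y))" for k
  proof
    fix y
    have "ee (of_int m * (y + of_int k)) = ee (of_int m * y + of_int (m * k))" by (simp add: algebra_simps)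
    also have "\<dots> = ee (of_int m * y)" by (rule ee_periodic)
    finally show "g (y + of_int k) = complex_of_real (exp (- a * (y + of_int k)\<^sup>2)) * ee (of_int m * y)"
      unfolding g_def by simp
  qed
  have "integral {0..1} (\<lambda>y. complex_of_real (Pr a y) * ee (of_int m * y)) = (LINT u|lborel. g u)"
  proof (rule shift_sum_lebesgue[OF intg contg])
    show "((\<lambda>k. integral {0..1} (\<lambda>y. g (y + of_int k))) has_sum integral {0..1} (\<lambda>y. complex_of_real (Pr a y) * ee (of_int m * y))) UNIV"
      unfolding gshift using hs unfolding sumx .
  qed
  also have "\<dots> = complex_of_real (sqrt (pi / a) * exp (- pi\<^sup>2 * (- of_int m)\<^sup>2 / a))"
    unfolding g_def by (rule gauss_ft(2)[OF a])
  finally show "integral {0..1} (\<lambda>y. complex_of_real (Pr a y) * ee (of_int m * y)) =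
           complex_of_real (sqrt (pi / a) * exp (- pi\<^sup>2 * (of_int m)\<^sup>2 / a))" by simp
qed

lemma poisson:
  assumes s: "\<sigma> > 0" and a: "a = 2 * pi\<^sup>2 * \<sigma>\<^sup>2"
  shows "complex_of_real (sqrt (pi / a)) * gauss_series \<sigma> x = complex_of_real (Pr a x)"
proof -
  have apos: "a > 0" using s a by simp
  define H where "H = (\<lambda>x. complex_of_real (sqrt (pi / a)) * gauss_series \<sigma> x - complex_of_real (Pr a x))"
  have "H x = 0"
  proof (rule fourier_unique)
    show "isCont H x" for x
      unfolding H_def by (intro continuous_diff continuous_mult continuous_const theta_facts(1)[OF s] P_facts(3)[OF apos])
    show "H (x + 1) = H x" for x
      unfolding H_def using theta_facts(2)[OF s] P_facts(4)[OF apos] by simp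
    fix n :: int
    have ci: "continuous_on {0..1} H"
      unfolding H_def using theta_facts(1)[OF s] P_facts(3)[OF apos]
      by (intro continuous_intros continuous_at_imp_continuous_on) auto
    have i1: "(\<lambda>x. gauss_series \<sigma> x * ee (of_int n * x)) integrable_on {0..1}"
      using theta_facts(1)[OF s]
      by (intro integrable_continuous_real continuous_intros continuous_at_imp_continuous_on) auto
    have i2: "(\<lambda>x. complex_of_real (Pr a x) * ee (of_int n * x)) integrable_on {0..1}"
      using P_facts(3)[OF apos]
      by (intro integrable_continuous_real continuous_intros continuous_at_imp_continuous_on) auto
    have "integral {0..1} (\<lambda>x. H x * ee (of_int n * x)) =
       integral {0..1} (\<lambda>x. complex_of_real (sqrt (pi / a)) * (gauss_series \<sigma> x * ee (of_int n * x))
                         - complex_of_real (Pr a x) * ee (of_int n * x))"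
      unfolding H_def by (simp add: algebra_simps)
    also have "\<dots> = complex_of_real (sqrt (pi / a)) * integral {0..1} (\<lambda>x. gauss_series \<sigma> x * ee (of_int n * x))
             - integral {0..1} (\<lambda>x. complex_of_real (Pr a x) * ee (of_int n * x))"
      using i1 i2 by (simp add: integral_diff integrable_on_cmult_left integral_mult_right)
    also have "\<dots> = complex_of_real (sqrt (pi / a)) * complex_of_real (qg \<sigma> n)
             - complex_of_real (sqrt (pi / a) * exp (- pi\<^sup>2 * (of_int n)\<^sup>2 / a))"
      by (simp only: theta_facts(3)[OF s] P_facts(5)[OF apos])
    also have "\<dots> = 0"
    proof -
      have "pi\<^sup>2 * (of_int n)\<^sup>2 / a = (of_int n)\<^sup>2 / \<sigma>\<^sup>2 / 2" using s a by (simp add: field_simps)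
      then show ?thesis by (simp add: qg_def)
    qed
    finally show "integral {0..1} (\<lambda>x. H x * ee (of_int n * x)) = 0" .
  qed
  then show ?thesis unfolding H_def by simp
qed

lemma Pr_nonneg: "Pr a y \<ge> 0"
  unfolding Pr_def by (rule infsum_nonneg) auto

lemma Pr_0_ge1:
  assumes "a > 0" shows "Pr a 0 \<ge> 1"
proof -
  have "(\<Sum>\<^sub>\<infinity>k\<in>{0::int}. exp (- a * (0 + of_int k)\<^sup>2)) \<le> (\<Sum>\<^sub>\<infinity>k\<in>UNIV. exp (- a * (0 + of_int k)\<^sup>2))"
    by (rule infsum_mono_neutral) (auto intro: P_facts(1)[OF assms, of 0, simplified])
  then show ?thesis unfolding Pr_def by simp
qed

lemma periodic_gauss_Pr:
  assumes s: "\<sigma> > 0" and a: "a = 2 * pi\<^sup>2 * \<sigma>\<^sup>2"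
  shows "periodic_gauss \<sigma> y = complex_of_real (Pr a y / Pr a 0)"
proof -
  have apos: "a > 0" using s a by simp
  have k: "sqrt (pi / a) > 0" using apos by simp
  have "gauss_series \<sigma> y = complex_of_real (Pr a y) / complex_of_real (sqrt (pi / a))" for y
    using poisson[OF s a, of y] k by (auto simp: eq_divide_eq mult.commute)
  then show ?thesis unfolding periodic_gauss_def using k apos by simp
qed

lemma gauss_tail_term:
  fixes a r t :: real and j :: nat
  assumes a: "a > 0" and r: "r \<ge> 0" and t: "\<bar>t\<bar> \<ge> r + real j"
  shows "exp (- a * t\<^sup>2) \<le> exp (- a * r\<^sup>2) * exp (- a) ^ j"
proof -
  have "(r + real j)\<^sup>2 \<le> t\<^sup>2"
    using t r by (metis abs_le_square_iff abs_of_nonneg add_nonneg_nonneg of_nat_0_le_iff order_trans abs_ge_zero)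
  moreover have "real j \<le> (real j)\<^sup>2"
    by (cases j) (auto simp: power2_eq_square)
  moreover have "(r + real j)\<^sup>2 = r\<^sup>2 + 2 * r * real j + (real j)\<^sup>2" by (simp add: power2_eq_square algebra_simps)
  moreover have "0 \<le> 2 * r * real j" using r by simp
  ultimately have "r\<^sup>2 + real j \<le> t\<^sup>2" by linarith
  then have "a * (r\<^sup>2 + real j) \<le> a * t\<^sup>2" using a by (intro mult_left_mono) auto
  moreover have "a * (r\<^sup>2 + real j) = a * r\<^sup>2 + a * real j" by (simp add: algebra_simps)
  ultimately have "- a * t\<^sup>2 \<le> - a * r\<^sup>2 + real j * (- a)" by (simp add: algebra_simps)
  then have "exp (- a * t\<^sup>2) \<le> exp (- a * r\<^sup>2 + real j * (- a))" by simp
  also have "\<dots> = exp (- a * r\<^sup>2) * exp (real j * (- a))" by (rule exp_add)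
  also have "\<dots> = exp (- a * r\<^sup>2) * exp (- a) ^ j" by (simp only: exp_of_nat_mult)
  finally show ?thesis .
qed

lemma Pr_tail:
  assumes a: "a > 0" and r: "0 \<le> r" and y: "\<not> (\<exists>k::int. \<bar>y - of_int k\<bar> \<le> r)"
  shows "Pr a y \<le> exp (- a * r\<^sup>2) * (2 / (1 - exp (- a)))"
proof -
  define y0 where "y0 = y - of_int \<lfloor>y\<rfloor>"
  have per: "Pr a (x + 1) = Pr a x" for x by (rule P_facts(4)[OF a])
  have "Pr a y = Pr a (y0 + of_int \<lfloor>y\<rfloor>)" by (simp add: y0_def)
  also have "\<dots> = Pr a y0" by (rule periodic_int[where H="Pr a", OF per])
  finally have Py: "Pr a y = Pr a y0" .
  have y0a: "r < y0" using y[rule_format] unfolding y0_def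
    by (metis abs_of_nonneg frac_def frac_ge_0 not_le)
  have y0b: "y0 < 1 - r"
  proof -
    have "\<not> \<bar>y - of_int (\<lfloor>y\<rfloor> + 1)\<bar> \<le> r" using y by blast
    moreover have "y - of_int (\<lfloor>y\<rfloor> + 1) < 0" by linarith
    ultimately show ?thesis unfolding y0_def by (simp add: abs_if split: if_splits)
  qed
  define \<rho> where "\<rho> = exp (- a)"
  have \<rho>: "0 \<le> \<rho>" "\<rho> < 1" using a by (auto simp: \<rho>_def)
  define c where "c = exp (- a * r\<^sup>2)"
  define h where "h = (\<lambda>k::int. c * \<rho> ^ (if k \<ge> 0 then nat k else nat (- k - 1)))"
  have hs: "(h has_sum (c / (1 - \<rho>) + c / (1 - \<rho>))) UNIV"
  proof (rule has_sum_int_split)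
    have "(\<lambda>n. c * \<rho> ^ n) sums (c * (1 / (1 - \<rho>)))" using geometric_sums[of \<rho>] \<rho> by (intro sums_mult) auto
    then have g: "((\<lambda>n. c * \<rho> ^ n) has_sum (c / (1 - \<rho>))) UNIV"
      using \<rho> by (intro sums_nonneg_imp_has_sum) (auto simp: c_def)
    show "((\<lambda>n::nat. h (int n)) has_sum c / (1 - \<rho>)) UNIV" using g by (simp add: h_def)
    have "(\<lambda>n::nat. h (- int n - 1)) = (\<lambda>n. c * \<rho> ^ n)" by (auto simp: h_def)
    then show "((\<lambda>n::nat. h (- int n - 1)) has_sum c / (1 - \<rho>)) UNIV" using g by simp
  qed
  have bound: "exp (- a * (y0 + of_int k)\<^sup>2) \<le> h k" for k
  proof (cases "k \<ge> 0")
    case True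
    have "\<bar>y0 + of_int k\<bar> \<ge> r + real (nat k)" using True y0a by simp
    then show ?thesis using gauss_tail_term[OF a r] True by (simp add: h_def c_def \<rho>_def)
  next
    case False
    have "\<bar>y0 + of_int k\<bar> \<ge> r + real (nat (- k - 1))" using False y0b by simp
    then show ?thesis using gauss_tail_term[OF a r] False by (simp add: h_def c_def \<rho>_def)
  qed
  have "Pr a y0 \<le> infsum h UNIV"
    unfolding Pr_def by (rule infsum_mono[OF P_facts(1)[OF a]]) (use hs bound in \<open>auto simp: has_sum_iff\<close>)
  also have "\<dots> = c / (1 - \<rho>) + c / (1 - \<rho>)" using hs by (simp add: has_sum_iff)
  also have "\<dots> = exp (- a * r\<^sup>2) * (2 / (1 - exp (- a)))" by (simp add: c_def \<rho>_def)
  finally show ?thesis using Py by simp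
qed

lemma ee_pow: "ee (real j * t) = ee t ^ j"
  by (induction j) (simp_all add: distrib_right ee_add)

lemma ee_eq_1: assumes "ee t = 1" shows "\<exists>n::int. t = of_int n"
proof -
  have "exp (\<i> * complex_of_real (2 * pi * t)) = exp 0" using assms by (simp add: ee_def)
  then obtain n :: int where n: "\<i> * complex_of_real (2 * pi * t) = 0 + of_int (2 * n) * pi * \<i>"
    unfolding exp_eq by blast
  then have "\<i> * complex_of_real (2 * pi * t) = \<i> * complex_of_real (2 * pi * of_int n)" by (simp add: algebra_simps)
  then have "complex_of_real (2 * pi * t) = complex_of_real (2 * pi * of_int n)" by simp
  then have "2 * pi * t = 2 * pi * of_int n" using of_real_eq_iff by blast
  then show ?thesis by auto
qed

lemma roots_sum:
  assumes n: "n > 0"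
  shows "(\<Sum>j<n. ee (of_int d * real j / real n)) = (if int n dvd d then of_nat n else 0)"
proof -
  define w where "w = ee (of_int d / real n)"
  have pw: "ee (of_int d * real j / real n) = w ^ j" for j
    unfolding w_def ee_pow[symmetric] by (simp add: field_simps)
  show ?thesis
  proof (cases "int n dvd d")
    case True
    then obtain q where q: "d = int n * q" by blast
    have "w = 1" unfolding w_def q using n by simp
    then show ?thesis using True by (simp add: pw)
  next
    case False
    have w1: "w \<noteq> 1"
    proof
      assume "w = 1"
      then obtain p :: int where p: "of_int d / real n = of_int p" unfolding w_def using ee_eq_1 by blast
      then have "of_int d = real n * of_int p" using n by (simp add: field_simps)
      then have "d = int n * p" by (metis of_int_eq_iff of_int_mult of_int_of_nat_eq)
      then show False using False by simp
    qed
    have "w ^ n = 1" unfolding w_def ee_pow[symmetric] using n by simp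
    then show ?thesis using False w1 by (simp add: pw sum_gp_strict)
  qed
qed

lemma norm_1_minus_ee: "norm (1 - ee y) = 2 * \<bar>sin (pi * y)\<bar>"
proof -
  have "(norm (1 - ee y))\<^sup>2 = (1 - cos (2 * pi * y))\<^sup>2 + (sin (2 * pi * y))\<^sup>2"
    unfolding cmod_power2 by (simp add: ee_def Re_exp Im_exp)
  also have "\<dots> = 2 - 2 * cos (2 * (pi * y))"
    using sin_cos_squared_add[of "2 * pi * y"] by (simp add: power2_eq_square algebra_simps)
  also have "\<dots> = (2 * \<bar>sin (pi * y)\<bar>)\<^sup>2"
    unfolding cos_double_sin by (simp add: power2_eq_square)
  finally show ?thesis
    by (metis abs_norm_cancel abs_mult abs_numeral power2_eq_iff_nonneg norm_ge_zero abs_ge_zero zero_le_mult_iff zero_le_numeral)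
qed

lemma sin_half_lower:
  fixes x :: real
  assumes "0 \<le> x" "x \<le> 1"
  shows "x / 2 \<le> sin x"
proof -
  have b: "\<bar>sin x - (\<Sum>m<3. sin_coeff m * x ^ m)\<bar> \<le> inverse (fact 3) * \<bar>x\<bar> ^ 3"
    by (rule Maclaurin_sin_bound)
  have s: "(\<Sum>m<3. sin_coeff m * x ^ m) = x"
    by (simp add: sin_coeff_def eval_nat_numeral)
  have c: "x ^ 3 \<le> x"
  proof -
    have "x ^ 3 = x * (x * x)" by (simp add: eval_nat_numeral)
    also have "\<dots> \<le> x * 1" using assms by (intro mult_left_mono) (auto simp: mult_le_one)
    finally show ?thesis by simp
  qed
  have "inverse (fact 3) * \<bar>x\<bar> ^ 3 = x ^ 3 / 6" using assms by (simp add: eval_nat_numeral)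
  then have d: "\<bar>sin x - x\<bar> \<le> x ^ 3 / 6" using b unfolding s by simp
  show ?thesis using c assms d abs_le_iff[of "sin x - x" "x ^ 3 / 6"] by linarith
qed

lemma frac_range:
  fixes r y :: real
  assumes r: "0 \<le> r" and y: "\<not> (\<exists>k::int. \<bar>y - of_int k\<bar> \<le> r)"
  shows "r < y - of_int \<lfloor>y\<rfloor>" "y - of_int \<lfloor>y\<rfloor> < 1 - r"
proof -
  show "r < y - of_int \<lfloor>y\<rfloor>" using y[rule_format]
    by (metis abs_of_nonneg frac_def frac_ge_0 not_le)
  have "\<not> \<bar>y - of_int (\<lfloor>y\<rfloor> + 1)\<bar> \<le> r" using y by blast
  moreover have "y - of_int (\<lfloor>y\<rfloor> + 1) < 0" by linarith
  ultimately show "y - of_int \<lfloor>y\<rfloor> < 1 - r" by (simp add: abs_if split: if_splits)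
qed

lemma sin_away:
  fixes r y :: real
  assumes r: "0 < r" "r \<le> 1 / 2" and y: "\<not> (\<exists>k::int. \<bar>y - of_int k\<bar> \<le> r)"
  shows "sin (pi * r) \<le> \<bar>sin (pi * y)\<bar>"
proof -
  define y0 where "y0 = y - of_int \<lfloor>y\<rfloor>"
  have a: "r < y0" "y0 < 1 - r" using frac_range[OF _ y] r unfolding y0_def by auto
  have "ee y = ee (y0 + of_int \<lfloor>y\<rfloor>)" by (simp add: y0_def)
  then have "ee y = ee y0" by (simp add: ee_periodic)
  then have "\<bar>sin (pi * y)\<bar> = \<bar>sin (pi * y0)\<bar>" using norm_1_minus_ee[of y] norm_1_minus_ee[of y0] by simp
  also have "\<dots> = sin (pi * y0)" using a r by (intro abs_of_nonneg sin_ge_zero) auto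
  also have "sin (pi * r) \<le> sin (pi * y0)"
  proof (cases "y0 \<le> 1 / 2")
    case True
    have "0 \<le> pi * r" "pi * r \<le> pi * y0" "pi * y0 \<le> pi / 2" using a r True by auto
    then show ?thesis by (intro sin_monotone_2pi_le) (use pi_gt_zero in linarith)+
  next
    case False
    have "sin (pi * y0) = sin (pi - pi * y0)" by simp
    also have "\<dots> = sin (pi * (1 - y0))" by (simp add: algebra_simps)
    finally have e: "sin (pi * y0) = sin (pi * (1 - y0))" .
    have "0 \<le> pi * r" "pi * r \<le> pi * (1 - y0)" "pi * (1 - y0) \<le> pi / 2" using a r False by auto
    then show ?thesis unfolding e by (intro sin_monotone_2pi_le) (use pi_gt_zero in linarith)+
  qed
  finally show ?thesis .
qed

lemma dirichlet_bound:
  assumes "ee y \<noteq> 1"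
  shows "norm (\<Sum>m\<in>{- int N..int N - 1}. ee (of_int m * y)) \<le> 2 / norm (1 - ee y)"
proof -
  have "(\<Sum>m\<in>{- int N..int N - 1}. ee (of_int m * y)) = (\<Sum>i<2 * N. ee (of_int (int i - int N) * y))"
    by (rule sum.reindex_bij_witness[of _ "\<lambda>i. int i - int N" "\<lambda>m. nat (m + int N)"]) auto
  also have "\<dots> = (\<Sum>i<2 * N. ee (- (real N * y)) * ee y ^ i)"
  proof (rule sum.cong[OF refl])
    fix i assume "i \<in> {..<2 * N}"
    have "of_int (int i - int N) * y = real i * y + - (real N * y)" by (simp add: algebra_simps)
    then have "ee (of_int (int i - int N) * y) = ee (real i * y) * ee (- (real N * y))"
      by (simp only: ee_add)
    then show "ee (of_int (int i - int N) * y) = ee (- (real N * y)) * ee y ^ i"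
      using ee_pow[of i y] by (metis mult.commute)
  qed
  also have "\<dots> = ee (- (real N * y)) * ((1 - ee y ^ (2 * N)) / (1 - ee y))"
    using assms by (simp add: sum_distrib_left[symmetric] sum_gp_strict)
  finally have eq: "(\<Sum>m\<in>{- int N..int N - 1}. ee (of_int m * y)) = ee (- (real N * y)) * ((1 - ee y ^ (2 * N)) / (1 - ee y))" .
  have "norm (1 - ee y ^ (2 * N)) \<le> 2"
    using norm_triangle_ineq4[of 1 "ee y ^ (2 * N)"] by (simp add: norm_power)
  then show ?thesis unfolding eq using assms
    by (simp add: norm_mult norm_divide divide_right_mono)
qed

lemma sampling_bound:
  assumes N: "N > 0" and r: "0 < r" "r \<le> 1 / 2" and y: "\<not> (\<exists>k::int. \<bar>y - of_int k\<bar> \<le> r)"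
  shows "norm (sampling_fun N y) \<le> 1 / (2 * real N * sin (pi * r))"
proof -
  have sr: "sin (pi * r) > 0" using r by (intro sin_gt_zero) auto
  have s: "sin (pi * r) \<le> \<bar>sin (pi * y)\<bar>" by (rule sin_away[OF r y])
  have ne: "norm (1 - ee y) \<ge> 2 * sin (pi * r)" using s by (simp add: norm_1_minus_ee)
  have np: "norm (1 - ee y) > 0" using ne sr by linarith
  then have ee1: "ee y \<noteq> 1" using sr by auto
  have "sampling_fun N y = (1 / (2 * of_nat N)) * (\<Sum>m\<in>{- int N..int N - 1}. ee (of_int m * y))"
    unfolding sampling_fun_def exp_eq_ee ..
  then have "norm (sampling_fun N y) = (1 / (2 * real N)) * norm (\<Sum>m\<in>{- int N..int N - 1}. ee (of_int m * y))"
    by (simp add: norm_mult norm_divide)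
  also have "\<dots> \<le> (1 / (2 * real N)) * (2 / norm (1 - ee y))"
    using dirichlet_bound[OF ee1, of N] by (intro mult_left_mono) auto
  also have "\<dots> \<le> (1 / (2 * real N)) * (2 / (2 * sin (pi * r)))"
    using ne sr N np by (intro mult_left_mono divide_left_mono) auto
  also have "\<dots> = 1 / (2 * real N * sin (pi * r))" by simp
  finally show ?thesis .
qed

lemma unique_residue:
  fixes m1 m2 d :: int and N :: nat
  assumes "m1 \<in> {- int N..int N - 1}" "m2 \<in> {- int N..int N - 1}"
    and "int (2 * N) dvd (d - m1)" "int (2 * N) dvd (d - m2)"
  shows "m1 = m2"
proof (rule ccontr)
  assume ne: "m1 \<noteq> m2"
  have "int (2 * N) dvd (m2 - m1)" using dvd_diff[OF assms(3) assms(4)] by simp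
  then have "\<bar>int (2 * N)\<bar> \<le> \<bar>m2 - m1\<bar>" using ne by (intro dvd_imp_le_int) auto
  then show False using assms(1,2) by auto
qed

lemma V_eq:
  assumes N: "N > 0"
  shows "(\<Sum>j<2 * N. ee (of_int k * (real j / (2 * real N))) * sampling_fun N (x - real j / (2 * real N))
            * ee (of_int n * (x - real j / (2 * real N))))
       = (\<Sum>m\<in>{- int N..int N - 1}. if int (2 * N) dvd (k - m - n) then ee (of_int (m + n) * x) else 0)"
proof -
  let ?B = "{- int N..int N - 1}"
  let ?t = "\<lambda>j::nat. real j / (2 * real N)"
  have trm: "ee (of_int k * ?t j) * ee (of_int m * (x - ?t j)) * ee (of_int n * (x - ?t j))
      = ee (of_int (m + n) * x) * ee (of_int (k - m - n) * real j / real (2 * N))" for j m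
  proof -
    have "ee (of_int k * ?t j) * ee (of_int m * (x - ?t j)) * ee (of_int n * (x - ?t j))
        = ee (of_int k * ?t j + of_int m * (x - ?t j) + of_int n * (x - ?t j))" by (simp add: ee_add)
    also have "of_int k * ?t j + of_int m * (x - ?t j) + of_int n * (x - ?t j)
        = of_int (m + n) * x + of_int (k - m - n) * real j / real (2 * N)"
      using N by (simp add: field_simps)
    also have "ee \<dots> = ee (of_int (m + n) * x) * ee (of_int (k - m - n) * real j / real (2 * N))" by (rule ee_add)
    finally show ?thesis .
  qed
  have "(\<Sum>j<2 * N. ee (of_int k * ?t j) * sampling_fun N (x - ?t j) * ee (of_int n * (x - ?t j)))
      = (\<Sum>j<2 * N. \<Sum>m\<in>?B. (1 / (2 * of_nat N)) * (ee (of_int (m + n) * x) * ee (of_int (k - m - n) * real j / real (2 * N))))"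
  proof (rule sum.cong[OF refl])
    fix j
    have "sampling_fun N (x - ?t j) = (1 / (2 * of_nat N)) * (\<Sum>m\<in>?B. ee (of_int m * (x - ?t j)))"
      unfolding sampling_fun_def exp_eq_ee ..
    then have "ee (of_int k * ?t j) * sampling_fun N (x - ?t j) * ee (of_int n * (x - ?t j)) =
        (\<Sum>m\<in>?B. (1 / (2 * of_nat N)) * (ee (of_int k * ?t j) * ee (of_int m * (x - ?t j)) * ee (of_int n * (x - ?t j))))"
      by (simp add: sum_distrib_left sum_distrib_right mult_ac)
    also have "\<dots> = (\<Sum>m\<in>?B. (1 / (2 * of_nat N)) * (ee (of_int (m + n) * x) * ee (of_int (k - m - n) * real j / real (2 * N))))"
      by (simp only: trm)
    finally show "ee (of_int k * ?t j) * sampling_fun N (x - ?t j) * ee (of_int n * (x - ?t j)) =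
        (\<Sum>m\<in>?B. (1 / (2 * of_nat N)) * (ee (of_int (m + n) * x) * ee (of_int (k - m - n) * real j / real (2 * N))))" .
  qed
  also have "\<dots> = (\<Sum>m\<in>?B. (1 / (2 * of_nat N)) * ee (of_int (m + n) * x) * (\<Sum>j<2 * N. ee (of_int (k - m - n) * real j / real (2 * N))))"
    by (subst sum.swap) (simp add: sum_distrib_left mult.assoc)
  also have "\<dots> = (\<Sum>m\<in>?B. if int (2 * N) dvd (k - m - n) then ee (of_int (m + n) * x) else 0)"
  proof (rule sum.cong[OF refl])
    fix m
    have r: "(\<Sum>j<2 * N. ee (of_int (k - m - n) * real j / real (2 * N))) =
       (if int (2 * N) dvd (k - m - n) then of_nat (2 * N) else 0)" using N by (intro roots_sum) simp
    show "(1 / (2 * of_nat N)) * ee (of_int (m + n) * x) * (\<Sum>j<2 * N. ee (of_int (k - m - n) * real j / real (2 * N)))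
        = (if int (2 * N) dvd (k - m - n) then ee (of_int (m + n) * x) else 0)"
      unfolding r using N by simp
  qed
  finally show ?thesis .
qed

lemma V_bound:
  fixes k n :: int and N :: nat and x :: real
  defines "V \<equiv> (\<Sum>m\<in>{- int N..int N - 1}. if int (2 * N) dvd (k - m - n) then ee (of_int (m + n) * x) else 0)"
  shows "norm V \<le> 1" and "k - n \<in> {- int N..int N - 1} \<Longrightarrow> V = ee (of_int k * x)"
proof -
  let ?B = "{- int N..int N - 1}"
  have single: "V = ee (of_int (m0 + n) * x)" if m0: "m0 \<in> ?B" "int (2 * N) dvd (k - m0 - n)" for m0
  proof -
    have "V = (\<Sum>m\<in>?B. if m = m0 then ee (of_int (m + n) * x) else 0)"
      unfolding V_def
    proof (intro sum.cong refl)
      fix m assume m: "m \<in> ?B"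
      have "int (2 * N) dvd (k - m - n) \<longleftrightarrow> m = m0"
        using unique_residue[of m N m0 "k - n"] m m0 by (auto simp: algebra_simps)
      then show "(if int (2 * N) dvd (k - m - n) then ee (of_int (m + n) * x) else 0) =
                 (if m = m0 then ee (of_int (m + n) * x) else 0)" by simp
    qed
    also have "\<dots> = ee (of_int (m0 + n) * x)" using m0 by simp
    finally show ?thesis .
  qed
  show "norm V \<le> 1"
  proof (cases "\<exists>m0\<in>?B. int (2 * N) dvd (k - m0 - n)")
    case True
    then obtain m0 where "m0 \<in> ?B" "int (2 * N) dvd (k - m0 - n)" by blast
    then show ?thesis using single by simp
  next
    case False
    then have "V = 0" unfolding V_def by (intro sum.neutral) auto
    then show ?thesis by simp
  qed
  assume "k - n \<in> ?B"
  then show "V = ee (of_int k * x)" using single[of "k - n"] by simp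
qed

lemma has_sum_finite_sum:
  fixes f :: "'j \<Rightarrow> 'a \<Rightarrow> 'b::topological_comm_monoid_add"
  assumes "finite J" "\<And>j. j \<in> J \<Longrightarrow> (f j has_sum S j) A"
  shows "((\<lambda>n. \<Sum>j\<in>J. f j n) has_sum (\<Sum>j\<in>J. S j)) A"
  using assms
proof (induction J rule: finite_induct)
  case empty then show ?case by simp
next
  case (insert j J)
  then show ?case by (simp add: has_sum_add)
qed

lemma gauss_series_0:
  assumes s: "\<sigma> > 0"
  shows "gauss_series \<sigma> 0 = complex_of_real (infsum (qg \<sigma>) UNIV)"
proof -
  have "gauss_series \<sigma> 0 = (\<Sum>\<^sub>\<infinity>n. complex_of_real (qg \<sigma> n))" unfolding gauss_series_eq by simp
  also have "\<dots> = complex_of_real (infsum (qg \<sigma>) UNIV)"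
    by (rule infsumI, rule has_sum_of_real, rule has_sum_infsum, rule qg_summable[OF s])
  finally show ?thesis .
qed

lemma qg_infsum_ge1:
  assumes s: "\<sigma> > 0" shows "infsum (qg \<sigma>) UNIV \<ge> 1"
proof -
  have "infsum (qg \<sigma>) {0} \<le> infsum (qg \<sigma>) UNIV"
    by (rule infsum_mono_neutral) (auto intro: qg_summable[OF s] less_imp_le[OF qg_pos])
  then show ?thesis by (simp add: qg_def)
qed

lemma W_bound:
  fixes k :: int and L :: int and N :: nat
  assumes s: "\<sigma> > 0" and N: "N > 0"
    and kL: "\<And>n::int. \<bar>n\<bar> < L \<Longrightarrow> k - n \<in> {- int N..int N - 1}"
  shows "norm (ee (of_int k * x) - (\<Sum>j<2 * N. ee (of_int k * (real j / (2 * real N))) * sampling_fun N (x - real j / (2 * real N))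
            * periodic_gauss \<sigma> (x - real j / (2 * real N))))
         \<le> 2 * (\<Sum>\<^sub>\<infinity>n::int. if \<bar>n\<bar> \<ge> L then qg \<sigma> n else 0)"
proof -
  let ?t = "\<lambda>j::nat. real j / (2 * real N)"
  define S0 where "S0 = gauss_series \<sigma> 0"
  define Qs where "Qs = infsum (qg \<sigma>) UNIV"
  have S0: "S0 = complex_of_real Qs" unfolding S0_def Qs_def by (rule gauss_series_0[OF s])
  have Qs1: "Qs \<ge> 1" unfolding Qs_def by (rule qg_infsum_ge1[OF s])
  have summ: "qg \<sigma> summable_on UNIV" by (rule qg_summable[OF s])
  define V where "V = (\<lambda>n::int. \<Sum>j<2 * N. ee (of_int k * ?t j) * sampling_fun N (x - ?t j) * ee (of_int n * (x - ?t j)))"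
  have Vb: "norm (V n) \<le> 1" for n
    unfolding V_def V_eq[OF N] by (rule V_bound(1))
  have Vk: "V n = ee (of_int k * x)" if "\<bar>n\<bar> < L" for n
    unfolding V_def V_eq[OF N] by (rule V_bound(2)) (rule kL[OF that])
  have sgs: "(\<lambda>n. complex_of_real (qg \<sigma> n) * ee (of_int n * y)) summable_on UNIV" for y
    by (rule summable_by_real[OF summ]) (simp add: norm_mult less_imp_le[OF qg_pos])
  define a where "a = (\<lambda>j. ee (of_int k * ?t j) * sampling_fun N (x - ?t j))"
  have "(\<Sum>j<2 * N. ee (of_int k * ?t j) * sampling_fun N (x - ?t j) * periodic_gauss \<sigma> (x - ?t j))
      = (\<Sum>j<2 * N. a j * gauss_series \<sigma> (x - ?t j)) / S0"
    unfolding periodic_gauss_def S0_def a_def by (simp add: sum_divide_distrib)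
  also have "(\<Sum>j<2 * N. a j * gauss_series \<sigma> (x - ?t j)) = (\<Sum>\<^sub>\<infinity>n. complex_of_real (qg \<sigma> n) * V n)"
  proof -
    have "((\<lambda>n. \<Sum>j<2 * N. a j * (complex_of_real (qg \<sigma> n) * ee (of_int n * (x - ?t j)))) has_sum
             (\<Sum>j<2 * N. a j * gauss_series \<sigma> (x - ?t j))) UNIV"
      unfolding gauss_series_eq
      by (intro has_sum_finite_sum has_sum_cmult_right has_sum_infsum sgs) auto
    moreover have "(\<lambda>n. \<Sum>j<2 * N. a j * (complex_of_real (qg \<sigma> n) * ee (of_int n * (x - ?t j)))) =
                   (\<lambda>n. complex_of_real (qg \<sigma> n) * V n)"
      unfolding V_def a_def by (auto simp: sum_distrib_left mult_ac)
    ultimately show ?thesis by (simp add: infsumI)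
  qed
  finally have W: "(\<Sum>j<2 * N. ee (of_int k * ?t j) * sampling_fun N (x - ?t j) * periodic_gauss \<sigma> (x - ?t j))
      = (\<Sum>\<^sub>\<infinity>n. complex_of_real (qg \<sigma> n) * V n) / S0" .
  have nV: "norm (complex_of_real (qg \<sigma> n) * V n) \<le> qg \<sigma> n" for n
    using mult_left_mono[OF Vb[of n] less_imp_le[OF qg_pos[of \<sigma> n]]] qg_pos[of \<sigma> n] by (simp add: norm_mult)
  have summV: "(\<lambda>n. complex_of_real (qg \<sigma> n) * V n) summable_on UNIV"
    by (rule summable_by_real[OF summ nV])
  have summE: "(\<lambda>n. complex_of_real (qg \<sigma> n) * ee (of_int k * x)) summable_on UNIV"
    by (rule summable_on_cmult_left, rule summable_on_of_real, rule summ)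
  have "ee (of_int k * x) = (S0 * ee (of_int k * x)) / S0" using S0 Qs1 by simp
  also have "S0 * ee (of_int k * x) = (\<Sum>\<^sub>\<infinity>n. complex_of_real (qg \<sigma> n) * ee (of_int k * x))"
  proof -
    have Sq: "(\<Sum>\<^sub>\<infinity>n. complex_of_real (qg \<sigma> n)) = complex_of_real Qs"
      unfolding Qs_def by (rule infsumI, rule has_sum_of_real, rule has_sum_infsum, rule summ)
    have "(\<Sum>\<^sub>\<infinity>n. complex_of_real (qg \<sigma> n) * ee (of_int k * x)) = (\<Sum>\<^sub>\<infinity>n. complex_of_real (qg \<sigma> n)) * ee (of_int k * x)"
      by (intro infsum_cmult_left summable_on_of_real summ)
    then show ?thesis unfolding S0 Sq by simp
  qed
  finally have E: "ee (of_int k * x) = (\<Sum>\<^sub>\<infinity>n. complex_of_real (qg \<sigma> n) * ee (of_int k * x)) / S0" .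
  have diff: "ee (of_int k * x) - (\<Sum>j<2 * N. ee (of_int k * ?t j) * sampling_fun N (x - ?t j) * periodic_gauss \<sigma> (x - ?t j))
     = (\<Sum>\<^sub>\<infinity>n. complex_of_real (qg \<sigma> n) * (ee (of_int k * x) - V n)) / S0"
  proof -
    have "(\<Sum>\<^sub>\<infinity>n. complex_of_real (qg \<sigma> n) * (ee (of_int k * x) - V n)) =
          (\<Sum>\<^sub>\<infinity>n. complex_of_real (qg \<sigma> n) * ee (of_int k * x)) - (\<Sum>\<^sub>\<infinity>n. complex_of_real (qg \<sigma> n) * V n)"
    proof -
      have "((\<lambda>n. complex_of_real (qg \<sigma> n) * ee (of_int k * x) + - (complex_of_real (qg \<sigma> n) * V n)) has_sum
          ((\<Sum>\<^sub>\<infinity>n. complex_of_real (qg \<sigma> n) * ee (of_int k * x)) + - (\<Sum>\<^sub>\<infinity>n. complex_of_real (qg \<sigma> n) * V n))) UNIV"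
        by (intro has_sum_add has_sum_uminusI has_sum_infsum summE summV)
      then show ?thesis by (simp add: algebra_simps infsumI)
    qed
    then show ?thesis unfolding W by (subst E) (simp add: diff_divide_distrib)
  qed
  define g where "g = (\<lambda>n::int. if \<bar>n\<bar> \<ge> L then 2 * qg \<sigma> n else 0)"
  have gb: "norm (complex_of_real (qg \<sigma> n) * (ee (of_int k * x) - V n)) \<le> g n" for n
  proof (cases "\<bar>n\<bar> \<ge> L")
    case True
    have "norm (ee (of_int k * x) - V n) \<le> 2"
      using norm_triangle_ineq4[of "ee (of_int k * x)" "V n"] Vb[of n] by simp
    then have "qg \<sigma> n * norm (ee (of_int k * x) - V n) \<le> qg \<sigma> n * 2"
      using qg_pos[of \<sigma> n] by (intro mult_left_mono) auto
    then show ?thesis using True qg_pos[of \<sigma> n] by (simp add: g_def norm_mult)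
  next
    case False then show ?thesis by (simp add: g_def Vk)
  qed
  have summg: "g summable_on UNIV"
  proof (rule summable_on_comparison_test[of "\<lambda>n. 2 * qg \<sigma> n"])
    show "(\<lambda>n. 2 * qg \<sigma> n) summable_on UNIV" by (rule summable_on_cmult_right[OF summ])
  qed (auto simp: g_def less_imp_le[OF qg_pos])
  have "norm (\<Sum>\<^sub>\<infinity>n. complex_of_real (qg \<sigma> n) * (ee (of_int k * x) - V n)) \<le> infsum g UNIV"
    by (rule norm_infsum_le[OF _ has_sum_infsum[OF summg] gb])
       (rule has_sum_infsum, rule summable_by_real[OF summg gb])
  also have "infsum g UNIV = 2 * (\<Sum>\<^sub>\<infinity>n::int. if \<bar>n\<bar> \<ge> L then qg \<sigma> n else 0)"
  proof -
    have "g = (\<lambda>n. 2 * (if \<bar>n\<bar> \<ge> L then qg \<sigma> n else 0))" by (auto simp: g_def fun_eq_iff)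
    then show ?thesis by (simp add: infsum_cmult_right')
  qed
  finally have nb: "norm (\<Sum>\<^sub>\<infinity>n. complex_of_real (qg \<sigma> n) * (ee (of_int k * x) - V n)) \<le>
      2 * (\<Sum>\<^sub>\<infinity>n::int. if \<bar>n\<bar> \<ge> L then qg \<sigma> n else 0)" .
  have "norm (ee (of_int k * x) - (\<Sum>j<2 * N. ee (of_int k * ?t j) * sampling_fun N (x - ?t j) * periodic_gauss \<sigma> (x - ?t j)))
      = norm (\<Sum>\<^sub>\<infinity>n. complex_of_real (qg \<sigma> n) * (ee (of_int k * x) - V n)) / Qs"
    unfolding diff S0 using Qs1 by (simp add: norm_divide)
  also have "\<dots> \<le> norm (\<Sum>\<^sub>\<infinity>n. complex_of_real (qg \<sigma> n) * (ee (of_int k * x) - V n))"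
    using Qs1 mult_left_mono[of 1 Qs "norm (\<Sum>\<^sub>\<infinity>n. complex_of_real (qg \<sigma> n) * (ee (of_int k * x) - V n))"]
    by (simp add: divide_le_eq)
  also have "\<dots> \<le> 2 * (\<Sum>\<^sub>\<infinity>n::int. if \<bar>n\<bar> \<ge> L then qg \<sigma> n else 0)" by (rule nb)
  finally show ?thesis .
qed

lemma norm_smult_vec: "norm ((z::complex) *s (v::complex^'m)) = norm z * norm v"
proof -
  have "norm (z *s v) = L2_set (\<lambda>i. norm z * norm (v $ i)) UNIV"
    unfolding norm_vec_def by (simp add: norm_mult)
  also have "\<dots> = norm z * L2_set (\<lambda>i. norm (v $ i)) UNIV"
    by (rule L2_set_right_distrib[symmetric]) simp
  finally show ?thesis by (simp add: norm_vec_def)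
qed

lemma continuous_on_smult_vec [continuous_intros]:
  fixes v :: "complex^'m"
  assumes "continuous_on S \<phi>"
  shows "continuous_on S (\<lambda>x. \<phi> x *s v)"
  unfolding vector_scalar_mult_def by (intro continuous_on_vec_lambda continuous_intros assms)

lemma L2norm01_le:
  fixes g :: "real \<Rightarrow> complex^'m"
  assumes B: "B \<ge> 0" and b: "\<And>x. x \<in> {0..1} \<Longrightarrow> norm (g x) \<le> B"
  shows "L2norm01 g \<le> B"
proof (cases "(\<lambda>x. (norm (g x))\<^sup>2) integrable_on {0..1}")
  case True
  have "integral {0..1} (\<lambda>x. (norm (g x))\<^sup>2) \<le> integral {0..1} (\<lambda>x::real. B\<^sup>2)"
    by (rule integral_le[OF True]) (auto intro!: power_mono b)
  also have "\<dots> = B\<^sup>2" by simp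
  finally have "sqrt (integral {0..1} (\<lambda>x. (norm (g x))\<^sup>2)) \<le> sqrt (B\<^sup>2)" by (rule real_sqrt_le_mono)
  then show ?thesis unfolding L2norm01_def using B by simp
next
  case False
  then show ?thesis unfolding L2norm01_def using B by (simp add: not_integrable_integral)
qed

lemma integral_sq_ge:
  fixes g :: "real \<Rightarrow> real"
  assumes c: "continuous_on {0..1} g"
  shows "(integral {0..1} g)\<^sup>2 \<le> integral {0..1} (\<lambda>x. (g x)\<^sup>2)"
proof -
  define A where "A = integral {0..1} g"
  have ig: "g integrable_on {0..1}" using c by (rule integrable_continuous_real)
  have ig2: "(\<lambda>x. (g x)\<^sup>2) integrable_on {0..1}" using c by (intro integrable_continuous_real continuous_intros)
  have "0 \<le> integral {0..1} (\<lambda>x. (g x - A)\<^sup>2)" by (rule integral_nonneg) (auto intro!: integrable_continuous_real continuous_intros c)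
  also have "(\<lambda>x. (g x - A)\<^sup>2) = (\<lambda>x. (g x)\<^sup>2 - (2 * A * g x - A\<^sup>2))" by (auto simp: power2_eq_square algebra_simps)
  also have "integral {0..1} \<dots> = integral {0..1} (\<lambda>x. (g x)\<^sup>2) - (2 * A * integral {0..1} g - A\<^sup>2)"
  proof -
    have i3: "(\<lambda>x. 2 * A * g x) integrable_on {0..1}" using c by (intro integrable_continuous_real continuous_intros)
    have i4: "(\<lambda>x. 2 * A * g x - A\<^sup>2) integrable_on {0..1}" using i3 by (intro integrable_diff) auto
    have "integral {0..1} (\<lambda>x. (g x)\<^sup>2 - (2 * A * g x - A\<^sup>2)) = integral {0..1} (\<lambda>x. (g x)\<^sup>2) - integral {0..1} (\<lambda>x. 2 * A * g x - A\<^sup>2)"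
      by (rule integral_diff[OF ig2 i4])
    also have "integral {0..1} (\<lambda>x. 2 * A * g x - A\<^sup>2) = integral {0..1} (\<lambda>x. 2 * A * g x) - integral {0..1} (\<lambda>x::real. A\<^sup>2)"
      by (rule integral_diff[OF i3]) auto
    also have "integral {0..1} (\<lambda>x. 2 * A * g x) = 2 * A * integral {0..1} g" by (rule integral_mult_right)
    finally show ?thesis by simp
  qed
  finally show ?thesis unfolding A_def by (simp add: power2_eq_square)
qed

lemma coeff_bound:
  fixes f :: "real \<Rightarrow> complex^'m" and c :: "int \<Rightarrow> complex^'m"
  assumes fK: "\<And>x. f x = (\<Sum>l\<in>K. ee (of_int l * x) *s c l)" and K: "finite K" and k: "k \<in> K"
  shows "norm (c k) \<le> L2norm01 f"
proof -
  have contf: "continuous_on S f" for S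
  proof -
    have "continuous_on S (\<lambda>x. \<Sum>l\<in>K. ee (of_int l * x) *s c l)" by (intro continuous_intros)
    moreover have "f = (\<lambda>x. \<Sum>l\<in>K. ee (of_int l * x) *s c l)" by (rule ext) (rule fK)
    ultimately show ?thesis by simp
  qed
  define g where "g = (\<lambda>x. ee (- (of_int k * x)) *s f x)"
  have contg: "continuous_on {0..1} g" unfolding g_def
    unfolding vector_scalar_mult_def by (intro continuous_on_vec_lambda continuous_intros continuous_on_compose2[OF contf]) auto
  have ck: "c k = integral {0..1} g"
  proof (subst vec_eq_iff, intro allI)
    fix i
    have "integral {0..1} g $ i = integral {0..1} ((\<lambda>v. v $ i) \<circ> g)"
      by (rule integral_linear[symmetric]) (auto intro: integrable_continuous_real contg bounded_linear_vec_nth)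
    also have "\<dots> = integral {0..1} (\<lambda>x. \<Sum>l\<in>K. c l $ i * ee (of_int (l - k) * x))"
    proof (rule integral_cong)
      fix x
      have "((\<lambda>v. v $ i) \<circ> g) x = (\<Sum>l\<in>K. ee (- (of_int k * x)) * ee (of_int l * x) * c l $ i)"
        unfolding g_def o_def fK by (simp add: sum_distrib_left mult.assoc)
      also have "\<dots> = (\<Sum>l\<in>K. c l $ i * ee (of_int (l - k) * x))"
        by (intro sum.cong refl) (simp add: ee_add[symmetric] algebra_simps)
      finally show "((\<lambda>v. v $ i) \<circ> g) x = (\<Sum>l\<in>K. c l $ i * ee (of_int (l - k) * x))" .
    qed
    also have "\<dots> = (\<Sum>l\<in>K. c l $ i * integral {0..1} (\<lambda>x. ee (of_int (l - k) * x)))"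
      by (subst integral_sum) (auto intro!: integrable_continuous_real continuous_intros simp: K integral_mult_right)
    also have "\<dots> = (\<Sum>l\<in>K. if l = k then c l $ i else 0)"
      by (intro sum.cong refl, subst int_ee) simp
    also have "\<dots> = c k $ i" using K k by simp
    finally show "c k $ i = integral {0..1} g $ i" by simp
  qed
  have "norm (c k) \<le> integral {0..1} (\<lambda>x. norm (f x))"
    unfolding ck
  proof (rule integral_norm_bound_integral)
    show "g integrable_on {0..1}" by (rule integrable_continuous_real[OF contg])
    show "(\<lambda>x. norm (f x)) integrable_on {0..1}" by (intro integrable_continuous_real continuous_intros contf)
    show "norm (g x) \<le> norm (f x)" if "x \<in> {0..1}" for x by (simp add: g_def norm_smult_vec)
  qed
  also have "\<dots> \<le> sqrt (integral {0..1} (\<lambda>x. (norm (f x))\<^sup>2))"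
  proof -
    have "(integral {0..1} (\<lambda>x. norm (f x)))\<^sup>2 \<le> integral {0..1} (\<lambda>x. (norm (f x))\<^sup>2)"
      by (rule integral_sq_ge) (intro continuous_intros contf)
    then show ?thesis by (simp add: real_le_rsqrt)
  qed
  finally show ?thesis unfolding L2norm01_def .
qed

lemma gauss_bound_away:
  assumes s: "\<sigma> > 0" and r: "0 \<le> r" and y: "\<not> (\<exists>k::int. \<bar>y - of_int k\<bar> \<le> r)"
  shows "norm (periodic_gauss \<sigma> y) \<le> exp (- (2 * pi\<^sup>2 * \<sigma>\<^sup>2) * r\<^sup>2) * (2 / (1 - exp (- (2 * pi\<^sup>2 * \<sigma>\<^sup>2))))"
proof -
  define a where "a = 2 * pi\<^sup>2 * \<sigma>\<^sup>2"
  have a: "a > 0" using s by (simp add: a_def)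
  have p0: "Pr a 0 \<ge> 1" by (rule Pr_0_ge1[OF a])
  have "norm (periodic_gauss \<sigma> y) = Pr a y / Pr a 0"
    using periodic_gauss_Pr[OF s a_def] Pr_nonneg[of a y] p0 by (simp add: norm_divide)
  also have "\<dots> \<le> Pr a y" using Pr_nonneg[of a y] p0 by (simp add: divide_le_eq mult_le_cancel_left1)
  also have "\<dots> \<le> exp (- a * r\<^sup>2) * (2 / (1 - exp (- a)))" by (rule Pr_tail[OF a r y])
  finally show ?thesis by (simp add: a_def)
qed

lemma pointwise_error:
  fixes f :: "real \<Rightarrow> complex^'m" and c :: "int \<Rightarrow> complex^'m" and M N :: nat and r \<sigma> x :: real
  assumes fK: "\<And>x. f x = (\<Sum>l\<in>{- int M..int M - 1}. ee (of_int l * x) *s c l)"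
    and N: "M < N" and s: "\<sigma> > 0" and r: "0 < r" "r \<le> 1 / 2"
  shows "norm (f x - reconstr N r \<sigma> f x) \<le> (\<Sum>l\<in>{- int M..int M - 1}. norm (c l)) *
     (2 * (\<Sum>\<^sub>\<infinity>n::int. if \<bar>n\<bar> \<ge> int (N - M) then qg \<sigma> n else 0)
      + exp (- (2 * pi\<^sup>2 * \<sigma>\<^sup>2) * r\<^sup>2) * (2 / (1 - exp (- (2 * pi\<^sup>2 * \<sigma>\<^sup>2)))) / sin (pi * r))"
proof -
  let ?K = "{- int M..int M - 1}"
  let ?t = "\<lambda>j::nat. real j / (2 * real N)"
  define T where "T = (\<Sum>\<^sub>\<infinity>n::int. if \<bar>n\<bar> \<ge> int (N - M) then qg \<sigma> n else 0)"
  define Bg where "Bg = exp (- (2 * pi\<^sup>2 * \<sigma>\<^sup>2) * r\<^sup>2) * (2 / (1 - exp (- (2 * pi\<^sup>2 * \<sigma>\<^sup>2))))"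
  define D where "D = (\<lambda>y. if \<exists>k::int. \<bar>y - of_int k\<bar> \<le> r then 0 else periodic_gauss \<sigma> y)"
  have N0: "N > 0" using N by simp
  have sr: "sin (pi * r) > 0" using r by (intro sin_gt_zero) auto
  have tg: "trunc_gauss r \<sigma> y = periodic_gauss \<sigma> y - D y" for y
    unfolding trunc_gauss_def D_def by auto
  define coef where "coef = (\<lambda>l. ee (of_int l * x) - (\<Sum>j<2 * N. sampling_fun N (x - ?t j) * trunc_gauss r \<sigma> (x - ?t j) * ee (of_int l * ?t j)))"
  have ident: "f x - reconstr N r \<sigma> f x = (\<Sum>l\<in>?K. coef l *s c l)"
  proof (subst vec_eq_iff, intro allI)
    fix i
    have "(f x - reconstr N r \<sigma> f x) $ i =
        (\<Sum>l\<in>?K. ee (of_int l * x) * c l $ i) -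
        (\<Sum>j<2 * N. sampling_fun N (x - ?t j) * trunc_gauss r \<sigma> (x - ?t j) * (\<Sum>l\<in>?K. ee (of_int l * ?t j) * c l $ i))"
      unfolding reconstr_def fK by simp
    also have "\<dots> = (\<Sum>l\<in>?K. ee (of_int l * x) * c l $ i) -
        (\<Sum>l\<in>?K. (\<Sum>j<2 * N. sampling_fun N (x - ?t j) * trunc_gauss r \<sigma> (x - ?t j) * ee (of_int l * ?t j)) * c l $ i)"
      by (simp add: sum_distrib_left sum_distrib_right mult.assoc sum.swap[of _ "{..<2 * N}"])
    also have "\<dots> = (\<Sum>l\<in>?K. coef l *s c l) $ i"
      unfolding coef_def by (simp add: sum_subtractf left_diff_distrib)
    finally show "(f x - reconstr N r \<sigma> f x) $ i = (\<Sum>l\<in>?K. coef l *s c l) $ i" .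
  qed
  have sD: "norm (sampling_fun N y * D y) \<le> Bg / (2 * real N * sin (pi * r))" for y
  proof (cases "\<exists>k::int. \<bar>y - of_int k\<bar> \<le> r")
    case True
    then show ?thesis using sr N0 by (simp add: D_def Bg_def)
  next
    case False
    have "norm (sampling_fun N y * D y) = norm (sampling_fun N y) * norm (periodic_gauss \<sigma> y)"
      using False by (simp add: D_def norm_mult)
    also have "\<dots> \<le> (1 / (2 * real N * sin (pi * r))) * Bg"
      unfolding Bg_def
      by (intro mult_mono sampling_bound[OF N0 r False] gauss_bound_away[OF s _ False]) (use r sr in auto)
    finally show ?thesis by simp
  qed
  have cb: "norm (coef l) \<le> 2 * T + Bg / sin (pi * r)" if l: "l \<in> ?K" for l
  proof -
    define W where "W = (\<Sum>j<2 * N. ee (of_int l * ?t j) * sampling_fun N (x - ?t j) * periodic_gauss \<sigma> (x - ?t j))"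
    define Z where "Z = (\<Sum>j<2 * N. sampling_fun N (x - ?t j) * D (x - ?t j) * ee (of_int l * ?t j))"
    have e: "(\<Sum>j<2 * N. sampling_fun N (x - ?t j) * trunc_gauss r \<sigma> (x - ?t j) * ee (of_int l * ?t j)) = W - Z"
      unfolding W_def Z_def tg sum_subtractf[symmetric] by (intro sum.cong refl) (simp add: algebra_simps)
    have "coef l = (ee (of_int l * x) - W) + Z"
      unfolding coef_def e by simp
    then have "norm (coef l) \<le> norm (ee (of_int l * x) - W) + norm Z"
      by (simp add: norm_triangle_ineq)
    also have "norm (ee (of_int l * x) - W) \<le> 2 * T"
      unfolding W_def T_def
    proof (rule W_bound[OF s N0])
      fix n :: int assume "\<bar>n\<bar> < int (N - M)"
      then show "l - n \<in> {- int N..int N - 1}" using l N by auto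
    qed
    also have "norm Z \<le> (\<Sum>j<2 * N. Bg / (2 * real N * sin (pi * r)))"
      unfolding Z_def
      by (rule order_trans[OF norm_sum], rule sum_mono) (use sD in \<open>simp add: norm_mult\<close>)
    also have "\<dots> = Bg / sin (pi * r)" using N0 by simp
    finally show ?thesis by simp
  qed
  have "norm (f x - reconstr N r \<sigma> f x) \<le> (\<Sum>l\<in>?K. norm (coef l) * norm (c l))"
    unfolding ident by (rule order_trans[OF norm_sum]) (simp add: norm_smult_vec)
  also have "\<dots> \<le> (\<Sum>l\<in>?K. (2 * T + Bg / sin (pi * r)) * norm (c l))"
    by (intro sum_mono mult_right_mono cb) auto
  also have "\<dots> = (\<Sum>l\<in>?K. norm (c l)) * (2 * T + Bg / sin (pi * r))"
    by (simp add: sum_distrib_left sum_distrib_right mult.commute)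
  finally show ?thesis unfolding T_def Bg_def .
qed

lemma gauss_tail_term2:
  fixes a R t :: real and j :: nat
  assumes a: "a > 0" and R: "R \<ge> 0" and t: "\<bar>t\<bar> \<ge> R + real j"
  shows "exp (- a * t\<^sup>2) \<le> exp (- a * R\<^sup>2) * exp (- 2 * a * R) ^ j"
proof -
  have "(R + real j)\<^sup>2 \<le> t\<^sup>2"
    using t R by (metis abs_le_square_iff abs_of_nonneg add_nonneg_nonneg of_nat_0_le_iff order_trans abs_ge_zero)
  moreover have "(R + real j)\<^sup>2 = R\<^sup>2 + 2 * R * real j + (real j)\<^sup>2" by (simp add: power2_eq_square algebra_simps)
  moreover have "0 \<le> (real j)\<^sup>2" by simp
  ultimately have "R\<^sup>2 + 2 * R * real j \<le> t\<^sup>2" by linarith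
  then have "a * (R\<^sup>2 + 2 * R * real j) \<le> a * t\<^sup>2" using a by (intro mult_left_mono) auto
  then have "- a * t\<^sup>2 \<le> - a * R\<^sup>2 + real j * (- 2 * a * R)" by (simp add: algebra_simps)
  then have "exp (- a * t\<^sup>2) \<le> exp (- a * R\<^sup>2 + real j * (- 2 * a * R))" by simp
  also have "\<dots> = exp (- a * R\<^sup>2) * exp (real j * (- 2 * a * R))" by (rule exp_add)
  also have "\<dots> = exp (- a * R\<^sup>2) * exp (- 2 * a * R) ^ j" by (simp only: exp_of_nat_mult)
  finally show ?thesis .
qed

lemma qg_tail:
  fixes L :: nat
  assumes s: "\<sigma> > 0" and L: "L \<ge> 1"
  shows "(\<Sum>\<^sub>\<infinity>n::int. if \<bar>n\<bar> \<ge> int L then qg \<sigma> n else 0)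
           \<le> exp (- (real L)\<^sup>2 / (2 * \<sigma>\<^sup>2)) * (2 / (1 - exp (- real L / \<sigma>\<^sup>2)))"
proof -
  define a where "a = 1 / (2 * \<sigma>\<^sup>2)"
  have a: "a > 0" using s by (simp add: a_def)
  define c where "c = exp (- a * (real L)\<^sup>2)"
  define \<rho> where "\<rho> = exp (- 2 * a * real L)"
  have \<rho>: "0 \<le> \<rho>" "\<rho> < 1" using a L by (auto simp: \<rho>_def)
  have c0: "c \<ge> 0" by (simp add: c_def)
  define h where "h = (\<lambda>n::int. if \<bar>n\<bar> \<ge> int L then c * \<rho> ^ nat (\<bar>n\<bar> - int L) else 0)"
  have geo: "(\<lambda>i. c * \<rho> ^ i) sums (c / (1 - \<rho>))"
    using geometric_sums[of \<rho>] \<rho> sums_mult[of "\<lambda>i. \<rho> ^ i" "1 / (1 - \<rho>)" c] by auto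
  have hs: "(h has_sum (c / (1 - \<rho>) + c / (1 - \<rho>))) UNIV"
  proof (rule has_sum_int_split)
    define f1 where "f1 = (\<lambda>n::nat. h (int n))"
    have "(\<lambda>i. f1 (i + L)) = (\<lambda>i. c * \<rho> ^ i)" by (auto simp: f1_def h_def nat_add_distrib)
    then have "f1 sums (c / (1 - \<rho>))"
      using geo sums_zero_iff_shift[of L f1 "c / (1 - \<rho>)"] by (auto simp: f1_def h_def)
    then show "((\<lambda>n::nat. h (int n)) has_sum c / (1 - \<rho>)) UNIV"
      unfolding f1_def by (rule sums_nonneg_imp_has_sum) (auto simp: h_def c0 \<rho>)
    define f2 where "f2 = (\<lambda>n::nat. h (- int n - 1))"
    have "(\<lambda>i. f2 (i + (L - 1))) = (\<lambda>i. c * \<rho> ^ i)"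
    proof
      fix i
      have "\<bar>- int (i + (L - 1)) - 1\<bar> = int i + int L" using L by simp
      then show "f2 (i + (L - 1)) = c * \<rho> ^ i" unfolding f2_def h_def by simp
    qed
    moreover have "f2 i = 0" if "i < L - 1" for i
    proof -
      have "\<bar>- int i - 1\<bar> < int L" using that by simp
      then show ?thesis unfolding f2_def h_def by simp
    qed
    ultimately have "f2 sums (c / (1 - \<rho>))"
      using geo sums_zero_iff_shift[of "L - 1" f2 "c / (1 - \<rho>)"] by auto
    then show "((\<lambda>n::nat. h (- int n - 1)) has_sum c / (1 - \<rho>)) UNIV"
      unfolding f2_def by (rule sums_nonneg_imp_has_sum) (auto simp: h_def c0 \<rho>)
  qed
  have qa: "qg \<sigma> n = exp (- a * (of_int n)\<^sup>2)" for n
    unfolding qg_def a_def by (simp add: field_simps)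
  have bound: "(if \<bar>n\<bar> \<ge> int L then qg \<sigma> n else 0) \<le> h n" for n
  proof (cases "\<bar>n\<bar> \<ge> int L")
    case True
    have "\<bar>(of_int n :: real)\<bar> \<ge> real L + real (nat (\<bar>n\<bar> - int L))" using True by simp
    then have "exp (- a * (of_int n)\<^sup>2) \<le> exp (- a * (real L)\<^sup>2) * exp (- 2 * a * real L) ^ nat (\<bar>n\<bar> - int L)"
      by (intro gauss_tail_term2[OF a]) auto
    then show ?thesis using True by (simp add: h_def qa c_def \<rho>_def)
  qed (simp add: h_def)
  have summ1: "(\<lambda>n::int. if \<bar>n\<bar> \<ge> int L then qg \<sigma> n else 0) summable_on UNIV"
    by (rule summable_on_comparison_test[OF qg_summable[OF s]]) (auto intro: less_imp_le[OF qg_pos])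
  have "(\<Sum>\<^sub>\<infinity>n::int. if \<bar>n\<bar> \<ge> int L then qg \<sigma> n else 0) \<le> infsum h UNIV"
    by (rule infsum_mono[OF summ1]) (use hs bound in \<open>auto simp: has_sum_iff\<close>)
  also have "\<dots> = c / (1 - \<rho>) + c / (1 - \<rho>)" using hs by (simp add: has_sum_iff)
  also have "\<dots> = exp (- (real L)\<^sup>2 / (2 * \<sigma>\<^sup>2)) * (2 / (1 - exp (- real L / \<sigma>\<^sup>2)))"
    unfolding c_def \<rho>_def a_def using s by (simp add: field_simps)
  finally show ?thesis .
qed

lemma inv_one_minus_exp:
  fixes u :: real assumes u: "u > 0"
  shows "1 / (1 - exp (- u)) \<le> 1 + 1 / u"
proof -
  have "1 + u \<le> exp u" by (rule exp_ge_add_one_self)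
  then have e: "exp (- u) \<le> 1 / (1 + u)" using u by (simp add: exp_minus field_simps)
  have pos: "1 - exp (- u) > 0" using u by simp
  have "u / (1 + u) \<le> 1 - exp (- u)" using e u by (simp add: field_simps)
  then have "1 / (1 - exp (- u)) \<le> 1 / (u / (1 + u))" using u pos by (intro divide_left_mono) auto
  also have "\<dots> = 1 + 1 / u" using u by (simp add: field_simps)
  finally show ?thesis .
qed

lemma asym:
  fixes \<alpha> \<beta> :: real and Ln :: nat
  assumes ab: "0 < \<alpha>" "\<alpha> < \<beta>" "\<beta> < 1" and L1: "Ln \<ge> 1"
    and La: "real Ln powr \<alpha> \<ge> 3 * pi\<^sup>2" and Lb: "real Ln powr (2 * \<beta>) \<ge> 3"
  defines "L \<equiv> real Ln"
  defines "\<sigma> \<equiv> L powr \<beta> / (sqrt 6 * pi)" and "r \<equiv> 3 * pi / L powr \<alpha>"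
  shows "2 * (\<Sum>\<^sub>\<infinity>n::int. if \<bar>n\<bar> \<ge> int Ln then qg \<sigma> n else 0)
         + exp (- (2 * pi\<^sup>2 * \<sigma>\<^sup>2) * r\<^sup>2) * (2 / (1 - exp (- (2 * pi\<^sup>2 * \<sigma>\<^sup>2)))) / sin (pi * r)
       \<le> 8 * (exp (- 3 * pi\<^sup>2 * L powr (2 * (1 - \<beta>))) * max 1 (L powr (2 * \<beta> - 1))
              + L powr (\<alpha> + \<beta>) * exp (- 3 * pi\<^sup>2 * L powr (2 * (\<beta> - \<alpha>))))"
proof -
  have L: "L \<ge> 1" using L1 by (simp add: L_def)
  have Lp: "L > 0" using L by simp
  have pi2: "pi\<^sup>2 > 9" using mult_strict_mono[OF pi_gt3 pi_gt3] by (simp add: power2_eq_square)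
  have s: "\<sigma> > 0" unfolding \<sigma>_def using Lp by simp
  have s2: "\<sigma>\<^sup>2 = L powr (2 * \<beta>) / (6 * pi\<^sup>2)"
  proof -
    have "(L powr \<beta>)\<^sup>2 = L powr (2 * \<beta>)" using Lp powr_power[of L \<beta> 2] by simp
    then show ?thesis unfolding \<sigma>_def by (simp add: power_divide power_mult_distrib)
  qed
  have Lpow2: "L\<^sup>2 = L powr 2" using Lp powr_realpow[of L 2] by simp
  have e1: "L\<^sup>2 / (2 * \<sigma>\<^sup>2) = 3 * pi\<^sup>2 * L powr (2 * (1 - \<beta>))"
  proof -
    have "L powr (2 * (1 - \<beta>)) = L powr 2 / L powr (2 * \<beta>)" by (simp add: powr_diff[symmetric] algebra_simps)
    then show ?thesis unfolding s2 Lpow2 by (simp add: field_simps)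
  qed
  define u where "u = L / \<sigma>\<^sup>2"
  have u: "u > 0" unfolding u_def using Lp s by simp
  have uinv: "1 / u = L powr (2 * \<beta> - 1) / (6 * pi\<^sup>2)"
  proof -
    have "L powr (2 * \<beta> - 1) = L powr (2 * \<beta>) / L powr 1" by (rule powr_diff)
    then show ?thesis unfolding u_def s2 using Lp by (simp add: field_simps)
  qed
  have "(\<Sum>\<^sub>\<infinity>n::int. if \<bar>n\<bar> \<ge> int Ln then qg \<sigma> n else 0)
        \<le> exp (- (real Ln)\<^sup>2 / (2 * \<sigma>\<^sup>2)) * (2 / (1 - exp (- real Ln / \<sigma>\<^sup>2)))"
    by (rule qg_tail[OF s L1])
  also have "\<dots> = exp (- 3 * pi\<^sup>2 * L powr (2 * (1 - \<beta>))) * (2 * (1 / (1 - exp (- u))))"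
    using e1 unfolding u_def L_def[symmetric] by simp
  also have "\<dots> \<le> exp (- 3 * pi\<^sup>2 * L powr (2 * (1 - \<beta>))) * (2 * (2 * max 1 (L powr (2 * \<beta> - 1))))"
  proof -
    have "1 / (1 - exp (- u)) \<le> 1 + 1 / u" by (rule inv_one_minus_exp[OF u])
    also have "1 / u \<le> L powr (2 * \<beta> - 1)" unfolding uinv
      using pi2 mult_left_mono[of 1 "6 * pi\<^sup>2" "L powr (2 * \<beta> - 1)"] by (simp add: divide_le_eq)
    also have "1 + L powr (2 * \<beta> - 1) \<le> 2 * max 1 (L powr (2 * \<beta> - 1))" by simp
    finally show ?thesis by (intro mult_left_mono) auto
  qed
  finally have T: "2 * (\<Sum>\<^sub>\<infinity>n::int. if \<bar>n\<bar> \<ge> int Ln then qg \<sigma> n else 0)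
      \<le> 8 * (exp (- 3 * pi\<^sup>2 * L powr (2 * (1 - \<beta>))) * max 1 (L powr (2 * \<beta> - 1)))" by (simp add: mult_ac)
  define a where "a = 2 * pi\<^sup>2 * \<sigma>\<^sup>2"
  have a_eq: "a = L powr (2 * \<beta>) / 3" unfolding a_def s2 by simp
  have a1: "a \<ge> 1" unfolding a_eq using Lb by (simp add: L_def)
  have La': "L powr \<alpha> > 0" using Lp by simp
  have r2: "a * r\<^sup>2 = 3 * pi\<^sup>2 * L powr (2 * (\<beta> - \<alpha>))"
  proof -
    have "(L powr \<alpha>)\<^sup>2 = L powr (2 * \<alpha>)" using Lp powr_power[of L \<alpha> 2] by simp
    moreover have "L powr (2 * (\<beta> - \<alpha>)) = L powr (2 * \<beta>) / L powr (2 * \<alpha>)" by (simp add: powr_diff[symmetric] algebra_simps)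
    ultimately show ?thesis unfolding a_eq r_def by (simp add: power_divide power_mult_distrib field_simps)
  qed
  have ea: "2 / (1 - exp (- a)) \<le> 4"
  proof -
    have "exp (- a) \<le> exp (- 1)" using a1 by simp
    also have "exp (- 1) \<le> (1 / 2 :: real)"
    proof -
      have "2 \<le> exp (1::real)" using exp_ge_add_one_self[of 1] by simp
      then show ?thesis by (simp add: exp_minus field_simps)
    qed
    finally have h: "exp (- a) \<le> 1 / 2" .
    then have "1 / 2 \<le> 1 - exp (- a)" by simp
    then have "2 / (1 - exp (- a)) \<le> 2 / (1 / 2)" by (intro divide_left_mono) (use a1 in auto)
    then show ?thesis by simp
  qed
  have pr: "pi * r = 3 * pi\<^sup>2 / L powr \<alpha>" unfolding r_def by (simp add: power2_eq_square)
  have pr1: "pi * r \<le> 1" unfolding pr using La La' by (simp add: L_def divide_le_eq)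
  have pr0: "pi * r > 0" unfolding pr using La' by simp
  have sinb: "pi * r / 2 \<le> sin (pi * r)" by (rule sin_half_lower) (use pr1 pr0 in auto)
  have "exp (- a * r\<^sup>2) * (2 / (1 - exp (- a))) / sin (pi * r) \<le> exp (- a * r\<^sup>2) * 4 / (pi * r / 2)"
  proof -
    have "1 - exp (- a) > 0" using a1 by simp
    then show ?thesis using ea sinb pr0 by (intro divide_mono mult_left_mono) auto
  qed
  also have "\<dots> = exp (- a * r\<^sup>2) * (8 / (3 * pi\<^sup>2)) * L powr \<alpha>" unfolding pr using La' by (simp add: field_simps)
  also have "\<dots> \<le> exp (- a * r\<^sup>2) * 1 * L powr (\<alpha> + \<beta>)"
  proof (intro mult_mono)
    show "8 / (3 * pi\<^sup>2) \<le> 1" using pi2 by simp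
    show "L powr \<alpha> \<le> L powr (\<alpha> + \<beta>)" using L ab by (intro powr_mono) auto
  qed auto
  also have "\<dots> = L powr (\<alpha> + \<beta>) * exp (- 3 * pi\<^sup>2 * L powr (2 * (\<beta> - \<alpha>)))"
    using r2 by (simp add: mult_ac)
  finally have B: "exp (- a * r\<^sup>2) * (2 / (1 - exp (- a))) / sin (pi * r) \<le> L powr (\<alpha> + \<beta>) * exp (- 3 * pi\<^sup>2 * L powr (2 * (\<beta> - \<alpha>)))" .
  have nn: "0 \<le> L powr (\<alpha> + \<beta>) * exp (- 3 * pi\<^sup>2 * L powr (2 * (\<beta> - \<alpha>)))" by simp
  have dist: "8 * (exp (- 3 * pi\<^sup>2 * L powr (2 * (1 - \<beta>))) * max 1 (L powr (2 * \<beta> - 1))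
              + L powr (\<alpha> + \<beta>) * exp (- 3 * pi\<^sup>2 * L powr (2 * (\<beta> - \<alpha>))))
     = 8 * (exp (- 3 * pi\<^sup>2 * L powr (2 * (1 - \<beta>))) * max 1 (L powr (2 * \<beta> - 1)))
              + 8 * (L powr (\<alpha> + \<beta>) * exp (- 3 * pi\<^sup>2 * L powr (2 * (\<beta> - \<alpha>))))"
    by (rule distrib_left)
  show ?thesis unfolding dist using T B nn unfolding a_def by linarith
qed

theorem theorem3p1:
  fixes M :: nat and f :: "real \<Rightarrow> complex ^ 'm" and \<alpha> \<beta> :: real
  assumes "bandlimited M f"
    and "0 < \<alpha>" and "\<alpha> < \<beta>" and "\<beta> < 1"
  shows "\<exists>C>0. \<forall>\<^sub>F N in sequentially.
           M < N \<and>
           L2norm01 (\<lambda>x. f x - reconstr N (3 * pi / (real N - real M) powr \<alpha>)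
                                   ((real N - real M) powr \<beta> / (sqrt 6 * pi)) f x)
             \<le> C * err_tilde N M \<alpha> \<beta> * L2norm01 f"
proof -
  note ab = assms(2-4)
  obtain c :: "int \<Rightarrow> complex ^ 'm" where
    c: "\<forall>x. f x = (\<Sum>k\<in>{- int M..int M - 1}. exp (\<i> * of_real (2 * pi * of_int k * x)) *s c k)"
    using assms(1) unfolding bandlimited_def by blast
  have fK: "\<And>x. f x = (\<Sum>l\<in>{- int M..int M - 1}. ee (of_int l * x) *s c l)"
    using c unfolding exp_eq_ee by blast
  define Sc where "Sc = (\<Sum>l\<in>{- int M..int M - 1}. norm (c l))"
  have Sc: "Sc \<le> 2 * real M * L2norm01 f"
  proof -
    have "Sc \<le> (\<Sum>l\<in>{- int M..int M - 1}. L2norm01 f)"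
      unfolding Sc_def by (intro sum_mono coeff_bound[OF fK]) auto
    also have "\<dots> = 2 * real M * L2norm01 f" by simp
    finally show ?thesis .
  qed
  have Sc0: "Sc \<ge> 0" unfolding Sc_def by (intro sum_nonneg) auto
  have Lf: "L2norm01 f \<ge> 0" unfolding L2norm01_def
    by (cases "(\<lambda>x. (norm (f x))\<^sup>2) integrable_on {0..1}") (auto intro!: integral_nonneg simp: not_integrable_integral)
  define \<Lambda> where "\<Lambda> = max ((3 * pi\<^sup>2) powr (1 / \<alpha>)) (3 powr (1 / (2 * \<beta>)))"
  define N0 where "N0 = M + nat \<lceil>\<Lambda>\<rceil> + 1"
  show ?thesis
  proof (intro exI[of _ "16 * real M + 1"] conjI)
    show "16 * real M + 1 > 0" by simp
    show "\<forall>\<^sub>F N in sequentially. M < N \<and>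
           L2norm01 (\<lambda>x. f x - reconstr N (3 * pi / (real N - real M) powr \<alpha>)
                                   ((real N - real M) powr \<beta> / (sqrt 6 * pi)) f x)
             \<le> (16 * real M + 1) * err_tilde N M \<alpha> \<beta> * L2norm01 f"
      unfolding eventually_sequentially
    proof (intro exI[of _ N0] allI impI)
      fix N assume N: "N0 \<le> N"
      define Ln where "Ln = N - M"
      have NM: "M < N" using N by (simp add: N0_def)
      have L: "real N - real M = real Ln" using NM by (simp add: Ln_def)
      have Ln1: "Ln \<ge> 1" using NM by (simp add: Ln_def)
      have LL: "real Ln \<ge> \<Lambda>"
      proof -
        have "nat \<lceil>\<Lambda>\<rceil> \<le> Ln" using N unfolding N0_def Ln_def by arith
        then have "real (nat \<lceil>\<Lambda>\<rceil>) \<le> real Ln" by (simp only: of_nat_le_iff)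
        moreover have "\<Lambda> \<le> real (nat \<lceil>\<Lambda>\<rceil>)" by (rule real_nat_ceiling_ge)
        ultimately show ?thesis by linarith
      qed
      have Lpos: "real Ln > 0" using Ln1 by simp
      have La: "real Ln powr \<alpha> \<ge> 3 * pi\<^sup>2"
      proof -
        have "(3 * pi\<^sup>2) powr (1 / \<alpha>) \<le> real Ln" using LL by (simp add: \<Lambda>_def)
        then have "((3 * pi\<^sup>2) powr (1 / \<alpha>)) powr \<alpha> \<le> real Ln powr \<alpha>"
          using ab by (intro powr_mono2) auto
        then show ?thesis using ab by (simp add: powr_powr)
      qed
      have Lb: "real Ln powr (2 * \<beta>) \<ge> 3"
      proof -
        have "3 powr (1 / (2 * \<beta>)) \<le> real Ln" using LL by (simp add: \<Lambda>_def)
        then have "(3 powr (1 / (2 * \<beta>))) powr (2 * \<beta>) \<le> real Ln powr (2 * \<beta>)"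
          using ab by (intro powr_mono2) auto
        then show ?thesis using ab by (simp add: powr_powr)
      qed
      define \<sigma> where "\<sigma> = real Ln powr \<beta> / (sqrt 6 * pi)"
      define r where "r = 3 * pi / real Ln powr \<alpha>"
      have s: "\<sigma> > 0" unfolding \<sigma>_def using Lpos by simp
      have r0: "r > 0" unfolding r_def using Lpos by simp
      have rh: "r \<le> 1 / 2"
      proof -
        have "r \<le> 3 * pi / (3 * pi\<^sup>2)" unfolding r_def using La Lpos by (intro divide_left_mono) auto
        also have "\<dots> = 1 / pi" by (simp add: power2_eq_square)
        also have "\<dots> \<le> 1 / 2" using pi_gt3 by (simp add: divide_le_eq)
        finally show ?thesis .
      qed
      define E where "E = err_tilde N M \<alpha> \<beta>"
      have E0: "E \<ge> 0" unfolding E_def err_tilde_def by (intro add_nonneg_nonneg mult_nonneg_nonneg) auto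
      have asy: "2 * (\<Sum>\<^sub>\<infinity>n::int. if \<bar>n\<bar> \<ge> int Ln then qg \<sigma> n else 0)
         + exp (- (2 * pi\<^sup>2 * \<sigma>\<^sup>2) * r\<^sup>2) * (2 / (1 - exp (- (2 * pi\<^sup>2 * \<sigma>\<^sup>2)))) / sin (pi * r) \<le> 8 * E"
        unfolding E_def err_tilde_def L \<sigma>_def r_def by (rule asym[OF ab Ln1 La Lb])
      have pw: "norm (f x - reconstr N r \<sigma> f x) \<le> Sc * (8 * E)" for x
      proof -
        have "norm (f x - reconstr N r \<sigma> f x) \<le> Sc *
           (2 * (\<Sum>\<^sub>\<infinity>n::int. if \<bar>n\<bar> \<ge> int (N - M) then qg \<sigma> n else 0)
            + exp (- (2 * pi\<^sup>2 * \<sigma>\<^sup>2) * r\<^sup>2) * (2 / (1 - exp (- (2 * pi\<^sup>2 * \<sigma>\<^sup>2)))) / sin (pi * r))"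
          unfolding Sc_def by (rule pointwise_error[OF fK NM s r0 rh])
        also have "\<dots> \<le> Sc * (8 * E)" using asy Sc0 unfolding Ln_def by (intro mult_left_mono) auto
        finally show ?thesis .
      qed
      have "L2norm01 (\<lambda>x. f x - reconstr N r \<sigma> f x) \<le> Sc * (8 * E)"
        by (rule L2norm01_le) (use Sc0 E0 pw in auto)
      also have "\<dots> \<le> (2 * real M * L2norm01 f) * (8 * E)" using Sc E0 by (intro mult_right_mono) auto
      also have "\<dots> \<le> (16 * real M + 1) * E * L2norm01 f"
      proof -
        have "(2 * real M * L2norm01 f) * (8 * E) = (16 * real M) * E * L2norm01 f" by simp
        also have "\<dots> \<le> (16 * real M + 1) * E * L2norm01 f"
          using E0 Lf by (intro mult_right_mono) auto
        finally show ?thesis .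
      qed
      finally show "M < N \<and>
           L2norm01 (\<lambda>x. f x - reconstr N (3 * pi / (real N - real M) powr \<alpha>)
                                   ((real N - real M) powr \<beta> / (sqrt 6 * pi)) f x)
             \<le> (16 * real M + 1) * err_tilde N M \<alpha> \<beta> * L2norm01 f"
        using NM unfolding L E_def r_def \<sigma>_def by simp
    qed
  qed
qed

end
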